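(* (1) The map $\lambda\mapsto L(\lambda)$ induces a bijection between $X(\infty)$ and the set of isomorphism classes of irreducible $\mathbf U(\infty)$-modules in the category $\mathcal C^{hi}$. (2) The map $\lambda\mapsto L(\lambda)$ induces a bijection between $X(\infty)$ and the set of isomorphism classes of irreducible $\mathbf U(\infty)$-modules in the category $\mathcal O$.
   Context: $v$ indeterminate. $\mathbf U(\infty)$ is the $\mathbb Q(v)$-algebra with generators $E_i,F_i,K_i,K_i^{-1}$ ($i\in\mathbb Z$) and relations: $K_iK_j=K_jK_i$, $K_iK_i^{-1}=1$; $K_iE_j=v^{\delta_{i,j}-\delta_{i,j+1}}E_jK_i$; $K_iF_j=v^{\delta_{i,j+1}-\delta_{i,j}}F_jK_i$; $E_iE_j=E_jE_i$, $F_iF_j=F_jF_i$ if $|i-j|>1$; $E_iF_j-F_jE_i=\delta_{i,j}\frac{\widetilde K_i-\widetilde K_i^{-1}}{v-v^{-1}}$, $\widetilde K_i=K_iK_{i+1}^{-1}$; $E_i^2E_j-(v+v^{-1})E_iE_jE_i+E_jE_i^2=0$ and likewise for $F$ if $|i-j|=1$. $X(\infty)$ is the set of all integer sequences $\lambda=(\lambda_i)_{i\in\mathbb Z}$ (no finiteness condition). $\alpha_i=\varepsilon_i-\varepsilon_{i+1}$ ($\varepsilon_i$ unit sequence); $\mu\le_{wt}\lambda$ iff $\lambda-\mu$ is a finite $\mathbb N$-linear combination of the $\alpha_i$; $(-\infty,\lambda]=\{\mu:\mu\le_{wt}\lambda\}$. For a $\mathbf U(\infty)$-module $M$ and $\lambda\in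 X(\infty)$, $M_\lambda=\{x:K_ix=v^{\lambda_i}x\ \forall i\}$, $\mathrm{wt}(M)=\{\lambda:M_\lambda\ne0\}$; $M$ is a weight module if $M=\bigoplus_\lambda M_\lambda$. $\mathcal C^{hi}$ is the full subcategory of weight modules $M$ such that for each $x\in M$ there is $n_0$ with $ux=0$ for every monomial $u$ in the $E_i$'s with at least $n_0$ factors. $\mathcal O$ is the full subcategory of weight modules with finite-dimensional weight spaces for which there are finitely many $\lambda^{(1)},\dots,\lambda^{(s)}\in X(\infty)$ with $\mathrm{wt}(M)\subseteq\bigcup_k(-\infty,\lambda^{(k)}]$. For $\lambda\in X(\infty)$, the Verma module is $M(\lambda)=\mathbf U(\infty)/(\sum_i\mathbf U(\infty)E_i+\sum_i\mathbf U(\infty)(K_i-v^{\lambda_i}))$; it has a unique maximal submodule, and $L(\lambda)$ denotes its unique irreducible quotient. *)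

theory Defs
  imports "HOL-Computational_Algebra.Fraction_Field" "HOL-Computational_Algebra.Polynomial"
          "HOL-Library.Function_Algebras"
begin

type_synonym qv = "rat poly fract"

definition vq :: qv where "vq = Fraction_Field.Fract [:0, 1:] 1"

text \<open>A (candidate) U(infinity)-module on the type 'b: the carrier is a subset of 'b,
  addition is that of the type, scalar multiplication by Q(v) is smult, and
  E i, F i, K i, K i^{-1} act by opE i, opF i, opK i, opKi i.\<close>
record 'b umod =
  carr  :: "'b set"
  smult :: "qv \<Rightarrow> 'b \<Rightarrow> 'b"
  opE   :: "int \<Rightarrow> 'b \<Rightarrow> 'b"
  opF   :: "int \<Rightarrow> 'b \<Rightarrow> 'b"
  opK   :: "int \<Rightarrow> 'b \<Rightarrow> 'b"
  opKi  :: "int \<Rightarrow> 'b \<Rightarrow> 'b"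

definition lin_on :: "'b::ab_group_add umod \<Rightarrow> ('b \<Rightarrow> 'b) \<Rightarrow> bool" where
  "lin_on M f \<longleftrightarrow> (\<forall>x\<in>carr M. f x \<in> carr M) \<and>
     (\<forall>x\<in>carr M. \<forall>y\<in>carr M. f (x + y) = f x + f y) \<and>
     (\<forall>c. \<forall>x\<in>carr M. f (smult M c x) = smult M c (f x))"

definition dlt :: "int \<Rightarrow> int \<Rightarrow> int" where "dlt i j = (if i = j then 1 else 0)"

definition is_Umod :: "'b::ab_group_add umod \<Rightarrow> bool" where
  "is_Umod M \<longleftrightarrow>
     vector_space (smult M) \<and> module.subspace (smult M) (carr M) \<and>
     (\<forall>i. lin_on M (opE M i) \<and> lin_on M (opF M i) \<and> lin_on M (opK M i) \<and> lin_on M (opKi M i)) \<and>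
     (\<forall>x\<in>carr M. \<forall>i j.
        opK M i (opK M j x) = opK M j (opK M i x) \<and>
        opK M i (opKi M i x) = x \<and> opKi M i (opK M i x) = x \<and>
        opK M i (opE M j x) = smult M (vq powi (dlt i j - dlt i (j + 1))) (opE M j (opK M i x)) \<and>
        opK M i (opF M j x) = smult M (vq powi (dlt i (j + 1) - dlt i j)) (opF M j (opK M i x)) \<and>
        (\<bar>i - j\<bar> > 1 \<longrightarrow> opE M i (opE M j x) = opE M j (opE M i x) \<and>
                             opF M i (opF M j x) = opF M j (opF M i x)) \<and>
        opE M i (opF M j x) - opF M j (opE M i x) =
          (if i = j then smult M (inverse (vq - inverse vq))
                (opK M i (opKi M (i + 1) x) - opK M (i + 1) (opKi M i x))
           else 0) \<and>
        (\<bar>i - j\<bar> = 1 \<longrightarrow>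
           opE M i (opE M i (opE M j x)) - smult M (vq + inverse vq) (opE M i (opE M j (opE M i x)))
             + opE M j (opE M i (opE M i x)) = 0 \<and>
           opF M i (opF M i (opF M j x)) - smult M (vq + inverse vq) (opF M i (opF M j (opF M i x)))
             + opF M j (opF M i (opF M i x)) = 0))"

definition is_submod :: "'b::ab_group_add umod \<Rightarrow> 'b set \<Rightarrow> bool" where
  "is_submod M W \<longleftrightarrow> W \<subseteq> carr M \<and> module.subspace (smult M) W \<and>
     (\<forall>i. \<forall>x\<in>W. opE M i x \<in> W \<and> opF M i x \<in> W \<and> opK M i x \<in> W \<and> opKi M i x \<in> W)"

definition irreducible_mod :: "'b::ab_group_add umod \<Rightarrow> bool" where
  "irreducible_mod M \<longleftrightarrow> is_Umod M \<and> carr M \<noteq> {0} \<and>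
     (\<forall>W. is_submod M W \<longrightarrow> W = {0} \<or> W = carr M)"

definition mod_iso :: "'b::ab_group_add umod \<Rightarrow> 'c::ab_group_add umod \<Rightarrow> bool" where
  "mod_iso M N \<longleftrightarrow> (\<exists>\<phi>. bij_betw \<phi> (carr M) (carr N) \<and>
     (\<forall>x\<in>carr M. \<forall>y\<in>carr M. \<phi> (x + y) = \<phi> x + \<phi> y) \<and>
     (\<forall>c. \<forall>x\<in>carr M. \<phi> (smult M c x) = smult N c (\<phi> x)) \<and>
     (\<forall>i. \<forall>x\<in>carr M. \<phi> (opE M i x) = opE N i (\<phi> x) \<and> \<phi> (opF M i x) = opF N i (\<phi> x) \<and>
                     \<phi> (opK M i x) = opK N i (\<phi> x) \<and> \<phi> (opKi M i x) = opKi N i (\<phi> x)))"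

text \<open>X(infinity): all integer sequences indexed by Z.\<close>
type_synonym wt = "int \<Rightarrow> int"

definition wspace :: "'b::ab_group_add umod \<Rightarrow> wt \<Rightarrow> 'b set" where
  "wspace M la = {x \<in> carr M. \<forall>i. opK M i x = smult M (vq powi la i) x}"

definition wts :: "'b::ab_group_add umod \<Rightarrow> wt set" where
  "wts M = {la. wspace M la \<noteq> {0}}"

definition weight_module :: "'b::ab_group_add umod \<Rightarrow> bool" where
  "weight_module M \<longleftrightarrow> is_Umod M \<and>
     (\<forall>x\<in>carr M. \<exists>S f. finite S \<and> (\<forall>\<mu>\<in>S. f \<mu> \<in> wspace M \<mu>) \<and> x = (\<Sum>\<mu>\<in>S. f \<mu>))"

text \<open>mu <=_wt lambda iff lambda - mu = sum_i c_i alpha_i, c finitely supported, c_i in N,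
  where alpha_i = eps_i - eps_(i+1); at position j this reads c_j - c_(j-1).\<close>
definition le_wt :: "wt \<Rightarrow> wt \<Rightarrow> bool" where
  "le_wt \<mu> la \<longleftrightarrow> (\<exists>c :: int \<Rightarrow> nat. finite {i. c i \<noteq> 0} \<and>
      (\<forall>j. la j - \<mu> j = int (c j) - int (c (j - 1))))"

definition in_Chi :: "'b::ab_group_add umod \<Rightarrow> bool" where
  "in_Chi M \<longleftrightarrow> weight_module M \<and>
     (\<forall>x\<in>carr M. \<exists>n0. \<forall>w :: int list. length w \<ge> n0 \<longrightarrow> foldr (opE M) w x = 0)"

definition in_O :: "'b::ab_group_add umod \<Rightarrow> bool" where
  "in_O M \<longleftrightarrow> weight_module M \<and>
     (\<forall>la. \<exists>B. finite B \<and> wspace M la \<subseteq> module.span (smult M) B) \<and>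
     (\<exists>Las. finite Las \<and> wts M \<subseteq> {\<mu>. \<exists>la\<in>Las. le_wt \<mu> la})"

text \<open>M is (isomorphic to) L(lambda): M is an irreducible quotient of the Verma module M(lambda).
  Since M(lambda) = U/(sum U E_i + sum U (K_i - v^lambda_i)), its quotients are exactly the
  modules generated by a vector m annihilated by all E_i and K_i - v^lambda_i; for an irreducible
  module, any nonzero vector generates it.\<close>
definition is_L :: "wt \<Rightarrow> 'b::ab_group_add umod \<Rightarrow> bool" where
  "is_L la M \<longleftrightarrow> irreducible_mod M \<and>
     (\<exists>m\<in>carr M. m \<noteq> 0 \<and> (\<forall>i. opE M i m = 0 \<and> opK M i m = smult M (vq powi la i) m))"

end

theory Submission
  imports Defs "HOL-Library.Countable"
begin

lemma Fract1_power: "(Fraction_Field.Fract (p::rat poly) 1) ^ n = Fraction_Field.Fract (p ^ n) 1"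
  by (induct n) (simp_all add: One_fract_def)

lemma vq_nz: "vq \<noteq> 0"
  unfolding vq_def by (simp add: Zero_fract_def eq_fract)

lemma vq_pow_ne1: "n > 0 \<Longrightarrow> vq ^ n \<noteq> 1"
proof
  assume n: "n > 0" and h: "vq ^ n = 1"
  have "Fraction_Field.Fract ([:0,1:] ^ n) 1 = Fraction_Field.Fract (1::rat poly) 1"
    using h unfolding vq_def Fract1_power One_fract_def by simp
  hence "[:0,1:] ^ n = (1::rat poly)" by (simp add: eq_fract)
  hence "degree ([:0,1::rat:] ^ n) = 0" by simp
  thus False using n by (simp add: degree_power_eq)
qed

lemma vq_powi_inj: assumes "vq powi a = vq powi b" shows "a = b"
proof (rule ccontr)
  assume ne: "a \<noteq> b"
  have "vq powi (a - b) = 1" using assms vq_nz by (simp add: power_int_diff)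
  moreover have "vq powi (b - a) = 1" using assms vq_nz by (simp add: power_int_diff)
  ultimately have "\<exists>n::nat. n > 0 \<and> vq ^ n = 1" using ne
    by (metis diff_gt_0_iff_gt linorder_neqE_linordered_idom power_int_of_nat zero_less_imp_eq_int
        of_nat_0_less_iff)
  thus False using vq_pow_ne1 by blast
qed

lemma vq_not_one: "vq - inverse vq \<noteq> 0"
proof
  assume "vq - inverse vq = 0"
  hence "vq powi 1 = vq powi (-1)" by (simp add: power_int_minus)
  thus False using vq_powi_inj by fastforce
qed

section \<open>The free module T\<close>

definition al :: "int \<Rightarrow> wt" where "al j = (\<lambda>i. dlt i j - dlt i (j+1))"

fun asum :: "int list \<Rightarrow> wt" where
  "asum [] = (\<lambda>i. 0)"
| "asum (a#w) = (\<lambda>i. al a i + asum w i)"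

lemma asum_append: "asum (u @ w) i = asum u i + asum w i"
  by (induct u) auto

lemma asum_ins: "asum (take p u @ a # drop p u) i = asum u i + al a i"
proof -
  have "asum (take p u @ a # drop p u) i = asum (take p u) i + al a i + asum (drop p u) i"
    by (simp add: asum_append)
  also have "\<dots> = asum u i + al a i"
    using asum_append[of "take p u" "drop p u" i] by simp
  finally show ?thesis .
qed

definition wtT :: "wt \<Rightarrow> int list \<Rightarrow> wt" where "wtT la u = (\<lambda>i. la i - asum u i)"

definition hsc :: "wt \<Rightarrow> int \<Rightarrow> qv" where
  "hsc mu i = inverse (vq - inverse vq) *
     (vq powi mu i * vq powi (- mu (i+1)) - vq powi (mu (i+1)) * vq powi (- mu i))"

type_synonym tv = "int list \<Rightarrow> qv"

definition sc :: "qv \<Rightarrow> tv \<Rightarrow> tv" where "sc c t = (\<lambda>u. c * t u)"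

definition Fop :: "int \<Rightarrow> tv \<Rightarrow> tv" where
  "Fop k t = (\<lambda>u. case u of [] \<Rightarrow> 0 | a # u' \<Rightarrow> if a = k then t u' else 0)"

definition Mop :: "wt \<Rightarrow> (wt \<Rightarrow> qv) \<Rightarrow> tv \<Rightarrow> tv" where
  "Mop la f t = (\<lambda>u. f (wtT la u) * t u)"

definition Eop :: "wt \<Rightarrow> int \<Rightarrow> tv \<Rightarrow> tv" where
  "Eop la i t = (\<lambda>u. \<Sum>p\<in>{0..length u}. hsc (wtT la (drop p u)) i * t (take p u @ i # drop p u))"

lemma Fop_Nil[simp]: "Fop k t [] = 0" and Fop_Cons[simp]: "Fop k t (a # u) = (if a = k then t u else 0)"
  by (simp_all add: Fop_def)

lemma Mop_apply[simp]: "Mop la f t u = f (wtT la u) * t u" by (simp add: Mop_def)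
lemma sc_apply[simp]: "sc c t u = c * t u" by (simp add: sc_def)

lemma wtT_ins: "wtT la (take p u @ a # drop p u) = (\<lambda>j. wtT la u j - al a j)"
  by (simp add: wtT_def asum_ins fun_eq_iff)

lemma wtT_Cons: "wtT la (a # u) = (\<lambda>j. wtT la u j - al a j)"
  by (simp add: wtT_def fun_eq_iff)

lemma E_F: "Eop la i (Fop k t) = Fop k (Eop la i t) + (if i = k then Mop la (\<lambda>mu. hsc mu i) t else 0)"
proof (rule ext)
  fix u show "Eop la i (Fop k t) u = (Fop k (Eop la i t) + (if i = k then Mop la (\<lambda>mu. hsc mu i) t else 0)) u"
  proof (cases u)
    case Nil thus ?thesis by (simp add: Eop_def)
  next
    case (Cons a u')
    have "Eop la i (Fop k t) u = hsc (wtT la u) i * Fop k t (i # u) +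
        (\<Sum>q = 0..length u'. hsc (wtT la (drop q u')) i * Fop k t (a # (take q u' @ i # drop q u')))"
      unfolding Eop_def Cons length_Cons sum.atLeast0_atMost_Suc_shift by simp
    also have "\<dots> = (if i = k then hsc (wtT la u) i * t u else 0) + (if a = k then Eop la i t u' else 0)"
      by (simp add: Eop_def)
    finally show ?thesis using Cons by simp
  qed
qed

lemma E_M: "Eop la i (Mop la f t) = Mop la (\<lambda>mu. f (\<lambda>j. mu j - al i j)) (Eop la i t)"
  by (rule ext) (simp add: Eop_def wtT_ins sum_distrib_left mult_ac)

lemma F_M: "Fop k (Mop la f t) = Mop la (\<lambda>mu. f (\<lambda>j. mu j + al k j)) (Fop k t)"
proof (rule ext)
  fix u show "Fop k (Mop la f t) u = Mop la (\<lambda>mu. f (\<lambda>j. mu j + al k j)) (Fop k t) u"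
    by (cases u) (simp_all add: wtT_Cons)
qed

lemma M_M: "Mop la f (Mop la g t) = Mop la (\<lambda>mu. f mu * g mu) t"
  by (rule ext) simp


definition qn :: "int \<Rightarrow> qv" where
  "qn n = inverse (vq - inverse vq) * (vq powi n - vq powi (- n))"

lemma hsc_qn: "hsc g b = qn (g b - g (b+1))"
  unfolding hsc_def qn_def using vq_nz by (simp add: power_int_add[symmetric] power_int_diff)

lemma al_eval: "al a b = (if b = a then 1 else 0) - (if b = a + 1 then 1 else 0)"
  by (simp add: al_def dlt_def)

lemma vq_sq: "vq * vq \<noteq> 1"
  using vq_pow_ne1[of 2] by (simp add: power2_eq_square)

definition Dq :: qv where "Dq = inverse (vq - inverse vq)"

lemma qn_Dq: "qn m = Dq * (vq powi m - inverse (vq powi m))"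
  unfolding qn_def Dq_def by (simp add: power_int_minus)

lemma Eop_add: "Eop la i (t + s) = Eop la i t + Eop la i s"
  by (rule ext) (simp add: Eop_def algebra_simps sum.distrib)
lemma Eop_diff: "Eop la i (t - s) = Eop la i t - Eop la i s"
  by (rule ext) (simp add: Eop_def algebra_simps sum_subtractf)
lemma Eop_sc: "Eop la i (sc c t) = sc c (Eop la i t)"
  by (rule ext) (simp add: Eop_def sum_distrib_left mult_ac)
lemma Eop_zero: "Eop la i 0 = 0"
  by (rule ext) (simp add: Eop_def)
lemma Eop_zero': "Eop la i (\<lambda>a. 0) = (\<lambda>a. 0)"
  by (rule ext) (simp add: Eop_def)
lemma Fop_add: "Fop k (t + s) = Fop k t + Fop k s"
  by (rule ext) (simp add: Fop_def split: list.split)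
lemma Fop_diff: "Fop k (t - s) = Fop k t - Fop k s"
  by (rule ext) (simp add: Fop_def split: list.split)
lemma Fop_sc: "Fop k (sc c t) = sc c (Fop k t)"
  by (rule ext) (simp add: Fop_def split: list.split)
lemma Fop_zero: "Fop k 0 = 0"
  by (rule ext) (simp add: Fop_def split: list.split)
lemma Mop_add: "Mop la f (t + s) = Mop la f t + Mop la f s"
  by (rule ext) (simp add: algebra_simps)
lemma Mop_diff: "Mop la f (t - s) = Mop la f t - Mop la f s"
  by (rule ext) (simp add: algebra_simps)
lemma Mop_sc: "Mop la f (sc c t) = sc c (Mop la f t)"
  by (rule ext) (simp add: algebra_simps)
lemma Mop_zero: "Mop la f 0 = 0"
  by (rule ext) simp

lemmas lin_simps = Eop_add Eop_diff Eop_sc Eop_zero Fop_add Fop_diff Fop_sc Fop_zero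
  Mop_add Mop_diff Mop_sc Mop_zero

definition SerE :: "wt \<Rightarrow> int \<Rightarrow> int \<Rightarrow> tv \<Rightarrow> tv" where
  "SerE la i j t = Eop la i (Eop la i (Eop la j t)) - sc (vq + inverse vq) (Eop la i (Eop la j (Eop la i t)))
     + Eop la j (Eop la i (Eop la i t))"

lemma SerE_F: assumes "\<bar>i - j\<bar> = 1" shows "SerE la i j (Fop k t) = Fop k (SerE la i j t)"
proof (rule ext)
  fix u
  have ij: "j = i + 1 \<or> j = i - 1" using assms by arith
  show "SerE la i j (Fop k t) u = Fop k (SerE la i j t) u"
    using ij
    apply (cases "k = i"; cases "k = j")
    apply (auto simp: SerE_def E_F E_M lin_simps hsc_qn al_eval)
    using vq_nz
    apply (auto simp: qn_Dq power_int_add power_int_diff field_simps)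
    apply (simp_all add: eval_nat_numeral algebra_simps)
    done
qed


definition ComE :: "wt \<Rightarrow> int \<Rightarrow> int \<Rightarrow> tv \<Rightarrow> tv" where
  "ComE la i j t = Eop la i (Eop la j t) - Eop la j (Eop la i t)"

lemma ComE_F: assumes "\<bar>i - j\<bar> > 1" shows "ComE la i j (Fop k t) = Fop k (ComE la i j t)"
proof (rule ext)
  fix u
  have ij: "i \<noteq> j" "j \<noteq> i + 1" "i \<noteq> j + 1" using assms by arith+
  show "ComE la i j (Fop k t) u = Fop k (ComE la i j t) u"
    using ij
    apply (cases "k = i"; cases "k = j")
    apply (auto simp: ComE_def E_F E_M lin_simps hsc_qn al_eval)
    done
qed

definition SerF :: "int \<Rightarrow> int \<Rightarrow> tv \<Rightarrow> tv" where
  "SerF i j t = Fop i (Fop i (Fop j t)) - sc (vq + inverse vq) (Fop i (Fop j (Fop i t)))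
     + Fop j (Fop i (Fop i t))"

definition ComF :: "int \<Rightarrow> int \<Rightarrow> tv \<Rightarrow> tv" where
  "ComF i j t = Fop i (Fop j t) - Fop j (Fop i t)"

lemma E_SerF: assumes "\<bar>i - j\<bar> = 1" shows "Eop la k (SerF i j t) = SerF i j (Eop la k t)"
proof (rule ext)
  fix u
  have ij: "j = i + 1 \<or> j = i - 1" using assms by arith
  show "Eop la k (SerF i j t) u = SerF i j (Eop la k t) u"
    using ij
    apply (cases "k = i"; cases "k = j")
    apply (auto simp: SerF_def E_F F_M lin_simps hsc_qn al_eval)
    using vq_nz
    apply (auto simp: qn_Dq power_int_add power_int_diff field_simps)
    apply (simp_all add: eval_nat_numeral algebra_simps)
    done
qed

lemma E_ComF: assumes "\<bar>i - j\<bar> > 1" shows "Eop la k (ComF i j t) = ComF i j (Eop la k t)"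
proof (rule ext)
  fix u
  have ij: "i \<noteq> j" "j \<noteq> i + 1" "i \<noteq> j + 1" using assms by arith+
  show "Eop la k (ComF i j t) u = ComF i j (Eop la k t) u"
    using ij
    apply (cases "k = i"; cases "k = j")
    apply (auto simp: ComF_def E_F F_M lin_simps hsc_qn al_eval)
    done
qed


definition Tfin :: "tv set" where "Tfin = {t. finite {u. t u \<noteq> 0}}"

definition dl :: "int list \<Rightarrow> tv" where "dl w = (\<lambda>u. if u = w then 1 else 0)"

lemma Fop_dl: "Fop k (dl w) = dl (k # w)"
  by (rule ext) (simp add: Fop_def dl_def split: list.split)

lemma Eop_dl_Nil: "Eop la i (dl []) = 0"
  by (rule ext) (simp add: Eop_def dl_def)

lemma dl_Tfin: "dl w \<in> Tfin"
proof -
  have "{u. dl w u \<noteq> 0} = {w}" by (auto simp: dl_def)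
  thus ?thesis by (simp add: Tfin_def)
qed

lemma sum_fun_app: "(\<Sum>w\<in>S. (f w :: tv)) u = (\<Sum>w\<in>S. f w u)"
  by (induct S rule: infinite_finite_induct) auto

lemma decomp: assumes "finite S" "{u. t u \<noteq> 0} \<subseteq> S" shows "t = (\<Sum>w\<in>S. sc (t w) (dl w))"
proof (rule ext)
  fix u
  have "(\<Sum>w\<in>S. sc (t w) (dl w)) u = (\<Sum>w\<in>S. t w * dl w u)" by (simp add: sum_fun_app)
  also have "\<dots> = (if u \<in> S then t u else 0)"
    by (simp add: dl_def if_distrib[of "\<lambda>x. _ * x"] assms(1) cong: if_cong)
  also have "\<dots> = t u" using assms by auto
  finally show "t u = (\<Sum>w\<in>S. sc (t w) (dl w)) u" by simp
qed

definition lin :: "(tv \<Rightarrow> tv) \<Rightarrow> bool" where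
  "lin X \<longleftrightarrow> (\<forall>t s. X (t + s) = X t + X s) \<and> (\<forall>c t. X (sc c t) = sc c (X t))"

lemma sc_zero: "sc 0 t = 0" by (rule ext) simp
lemma sc_add: "sc c (t + s) = sc c t + sc c s" by (rule ext) (simp add: algebra_simps)
lemma sc_diff: "sc c (t - s) = sc c t - sc c s" by (rule ext) (simp add: algebra_simps)
lemma sc_sc: "sc c (sc d t) = sc (c * d) t" by (rule ext) simp
lemma sc_0r: "sc c 0 = 0" by (rule ext) simp

lemma lin_zero: "lin X \<Longrightarrow> X 0 = 0"
  unfolding lin_def by (metis sc_zero)

lemma lin_diff: "lin X \<Longrightarrow> X (t - s) = X t - X s"
proof -
  assume l: "lin X"
  have "X (t - s) + X s = X t" using l unfolding lin_def by (metis diff_add_cancel)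
  thus ?thesis by (simp add: eq_diff_eq)
qed

lemma lin_sum: "lin X \<Longrightarrow> X (\<Sum>w\<in>S. f w) = (\<Sum>w\<in>S. X (f w))"
  by (induct S rule: infinite_finite_induct) (auto simp: lin_zero lin_def)

lemma lin_basis:
  assumes "lin X" "lin Y" "\<And>w. X (dl w) = Y (dl w)" "t \<in> Tfin"
  shows "X t = Y t"
proof -
  have f: "finite {u. t u \<noteq> 0}" using assms(4) by (simp add: Tfin_def)
  let ?S = "{u. t u \<noteq> 0}"
  have "X t = X (\<Sum>w\<in>?S. sc (t w) (dl w))" using decomp[OF f] by simp
  also have "\<dots> = (\<Sum>w\<in>?S. sc (t w) (X (dl w)))" using assms(1) by (simp add: lin_sum lin_def)
  also have "\<dots> = (\<Sum>w\<in>?S. sc (t w) (Y (dl w)))" using assms(3) by simp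
  also have "\<dots> = Y (\<Sum>w\<in>?S. sc (t w) (dl w))" using assms(2) by (simp add: lin_sum lin_def)
  also have "\<dots> = Y t" using decomp[OF f] by simp
  finally show ?thesis .
qed

lemma lin_Eop: "lin (Eop la i)" by (simp add: lin_def lin_simps)
lemma lin_Fop: "lin (Fop k)" by (simp add: lin_def lin_simps)
lemma lin_Mop: "lin (Mop la f)" by (simp add: lin_def lin_simps)
lemma lin_0: "lin (\<lambda>t. 0)" by (simp add: lin_def sc_0r)
lemma lin_SerE: "lin (SerE la i j)"
  unfolding lin_def SerE_def by (auto simp: lin_simps fun_eq_iff algebra_simps)
lemma lin_ComE: "lin (ComE la i j)"
  unfolding lin_def ComE_def by (auto simp: lin_simps fun_eq_iff algebra_simps)

lemma Fop_zero': "Fop k (\<lambda>a. 0) = (\<lambda>a. 0)"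
  by (rule ext) (simp add: Fop_def split: list.split)

lemma SerE_dl: assumes "\<bar>i - j\<bar> = 1" shows "SerE la i j (dl w) = 0"
proof (induct w)
  case Nil thus ?case by (simp add: SerE_def Eop_dl_Nil Eop_zero sc_0r)
next
  case (Cons k w) thus ?case using SerE_F[OF assms] by (simp add: Fop_dl[symmetric] Fop_zero Fop_zero')
qed

lemma ComE_dl: assumes "\<bar>i - j\<bar> > 1" shows "ComE la i j (dl w) = 0"
proof (induct w)
  case Nil thus ?case by (simp add: ComE_def Eop_dl_Nil Eop_zero)
next
  case (Cons k w) thus ?case using ComE_F[OF assms] by (simp add: Fop_dl[symmetric] Fop_zero Fop_zero')
qed

lemma SerE_Tfin: "\<bar>i - j\<bar> = 1 \<Longrightarrow> t \<in> Tfin \<Longrightarrow> SerE la i j t = 0"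
  using lin_basis[OF lin_SerE lin_0, of la i j] SerE_dl by blast

lemma ComE_Tfin: "\<bar>i - j\<bar> > 1 \<Longrightarrow> t \<in> Tfin \<Longrightarrow> ComE la i j t = 0"
  using lin_basis[OF lin_ComE lin_0, of la i j] ComE_dl by blast

lemma Tfin_add: "t \<in> Tfin \<Longrightarrow> s \<in> Tfin \<Longrightarrow> t + s \<in> Tfin"
proof -
  assume a: "t \<in> Tfin" "s \<in> Tfin"
  have "{u. (t + s) u \<noteq> 0} \<subseteq> {u. t u \<noteq> 0} \<union> {u. s u \<noteq> 0}" by auto
  thus ?thesis using a by (auto simp: Tfin_def intro: finite_subset)
qed

lemma Tfin_sc: "t \<in> Tfin \<Longrightarrow> sc c t \<in> Tfin"
proof -
  assume a: "t \<in> Tfin"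
  have "{u. sc c t u \<noteq> 0} \<subseteq> {u. t u \<noteq> 0}" by auto
  thus ?thesis using a by (auto simp: Tfin_def intro: finite_subset)
qed

lemma Tfin_zero: "0 \<in> Tfin" by (simp add: Tfin_def)

lemma minus_sc: "- t = sc (-1) t" by (rule ext) simp

lemma Tfin_diff: "t \<in> Tfin \<Longrightarrow> s \<in> Tfin \<Longrightarrow> t - s \<in> Tfin"
  using Tfin_add[of t "sc (-1) s"] Tfin_sc[of s "-1"] by (simp add: minus_sc[symmetric])

lemma Tfin_Mop: "t \<in> Tfin \<Longrightarrow> Mop la f t \<in> Tfin"
proof -
  assume a: "t \<in> Tfin"
  have "{u. Mop la f t u \<noteq> 0} \<subseteq> {u. t u \<noteq> 0}" by auto
  thus ?thesis using a by (auto simp: Tfin_def intro: finite_subset)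
qed

lemma Tfin_Fop: "t \<in> Tfin \<Longrightarrow> Fop k t \<in> Tfin"
proof -
  assume a: "t \<in> Tfin"
  have "{u. Fop k t u \<noteq> 0} \<subseteq> (Cons k) ` {u. t u \<noteq> 0}"
  proof
    fix u assume "u \<in> {u. Fop k t u \<noteq> 0}"
    thus "u \<in> (Cons k) ` {u. t u \<noteq> 0}" by (cases u) (auto split: if_splits)
  qed
  thus ?thesis using a by (auto simp: Tfin_def intro: finite_subset)
qed

lemma Tfin_Eop: "t \<in> Tfin \<Longrightarrow> Eop la i t \<in> Tfin"
proof -
  assume a: "t \<in> Tfin"
  let ?D = "\<Union>w\<in>{u. t u \<noteq> 0}. (\<lambda>p. take p w @ drop (Suc p) w) ` {0..<length w}"
  have "{u. Eop la i t u \<noteq> 0} \<subseteq> ?D"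
  proof
    fix u assume "u \<in> {u. Eop la i t u \<noteq> 0}"
    hence "(\<Sum>p\<in>{0..length u}. hsc (wtT la (drop p u)) i * t (take p u @ i # drop p u)) \<noteq> 0"
      by (simp add: Eop_def)
    then obtain p where p: "p \<le> length u" "t (take p u @ i # drop p u) \<noteq> 0"
      by (smt (verit, del_insts) atLeastAtMost_iff mult_zero_right sum.neutral)
    let ?w = "take p u @ i # drop p u"
    have "take p ?w = take p u" "drop (Suc p) ?w = drop p u" using p(1) by simp_all
    hence ueq: "u = take p ?w @ drop (Suc p) ?w" by simp
    have plt: "p < length ?w" using p(1) by simp
    show "u \<in> ?D"
    proof (rule UN_I[of ?w])
      show "?w \<in> {u. t u \<noteq> 0}" using p(2) by simp
      show "u \<in> (\<lambda>p. take p ?w @ drop (Suc p) ?w) ` {0..<length ?w}"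
        using ueq plt by (intro image_eqI[of u _ p]) auto
    qed
  qed
  moreover have "finite ?D" using a by (simp add: Tfin_def)
  ultimately show ?thesis by (auto simp: Tfin_def intro: finite_subset)
qed

section \<open>Kernel of the form\<close>

definition kerP :: "wt \<Rightarrow> tv \<Rightarrow> bool" where
  "kerP la t \<longleftrightarrow> (\<forall>e. foldr (Eop la) e t [] = 0)"

lemma foldr_E_add: "foldr (Eop la) e (t + s) = foldr (Eop la) e t + foldr (Eop la) e s"
  by (induct e) (simp_all only: foldr_Cons foldr_Nil o_apply id_apply Eop_add)
lemma foldr_E_sc: "foldr (Eop la) e (sc c t) = sc c (foldr (Eop la) e t)"
  by (induct e) (simp_all only: foldr_Cons foldr_Nil o_apply id_apply Eop_sc)
lemma foldr_E_diff: "foldr (Eop la) e (t - s) = foldr (Eop la) e t - foldr (Eop la) e s"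
  by (induct e) (simp_all only: foldr_Cons foldr_Nil o_apply id_apply Eop_diff)
lemma foldr_E_zero: "foldr (Eop la) e 0 = 0"
  by (induct e) (simp_all only: foldr_Cons foldr_Nil o_apply id_apply Eop_zero)

lemma kerP_add: "kerP la t \<Longrightarrow> kerP la s \<Longrightarrow> kerP la (t + s)"
  by (simp add: kerP_def foldr_E_add)
lemma kerP_diff: "kerP la t \<Longrightarrow> kerP la s \<Longrightarrow> kerP la (t - s)"
  by (simp add: kerP_def foldr_E_diff)
lemma kerP_sc: "kerP la t \<Longrightarrow> kerP la (sc c t)"
  by (simp add: kerP_def foldr_E_sc)
lemma kerP_zero: "kerP la 0"
  by (simp add: kerP_def foldr_E_zero)

lemma kerP_Eop: "kerP la t \<Longrightarrow> kerP la (Eop la i t)"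
  unfolding kerP_def by (metis foldr_append foldr_Cons foldr_Nil o_apply id_apply)

lemma foldr_E_Mop: "\<exists>g. foldr (Eop la) e (Mop la f t) = Mop la g (foldr (Eop la) e t)"
proof (induct e arbitrary: f)
  case Nil show ?case by (rule exI[of _ f]) simp
next
  case (Cons i e)
  then obtain g where "foldr (Eop la) e (Mop la f t) = Mop la g (foldr (Eop la) e t)" by blast
  hence "foldr (Eop la) (i # e) (Mop la f t) = Mop la (\<lambda>mu. g (\<lambda>j. mu j - al i j)) (foldr (Eop la) (i # e) t)"
    by (simp only: foldr_Cons o_apply E_M)
  thus ?case by blast
qed

lemma kerP_Mop: "kerP la t \<Longrightarrow> kerP la (Mop la f t)"
  unfolding kerP_def by (metis foldr_E_Mop Mop_apply mult_zero_right)

lemma kerP_Fop: "kerP la t \<Longrightarrow> kerP la (Fop k t)"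
proof -
  have "\<forall>t. kerP la t \<longrightarrow> foldr (Eop la) e (Fop k t) [] = 0" for e
  proof (induct e rule: rev_induct)
    case Nil show ?case by simp
  next
    case (snoc i e)
    show ?case
    proof (intro allI impI)
      fix t assume kt: "kerP la t"
      have "foldr (Eop la) (e @ [i]) (Fop k t) = foldr (Eop la) e (Eop la i (Fop k t))" by simp
      also have "\<dots> = foldr (Eop la) e (Fop k (Eop la i t)) +
          foldr (Eop la) e (if i = k then Mop la (\<lambda>mu. hsc mu i) t else 0)"
        by (simp add: E_F foldr_E_add)
      finally have eq: "foldr (Eop la) (e @ [i]) (Fop k t) [] = foldr (Eop la) e (Fop k (Eop la i t)) [] +
          foldr (Eop la) e (if i = k then Mop la (\<lambda>mu. hsc mu i) t else 0) []" by simp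
      have 1: "foldr (Eop la) e (Fop k (Eop la i t)) [] = 0"
        using snoc kerP_Eop[OF kt] by blast
      have 2: "foldr (Eop la) e (if i = k then Mop la (\<lambda>mu. hsc mu i) t else 0) [] = 0"
        using kerP_Mop[OF kt] kerP_zero unfolding kerP_def by (cases "i = k") auto
      show "foldr (Eop la) (e @ [i]) (Fop k t) [] = 0" using eq 1 2 by simp
    qed
  qed
  thus "kerP la t \<Longrightarrow> kerP la (Fop k t)" unfolding kerP_def by blast
qed

lemma foldr_E_SerF: "\<bar>i - j\<bar> = 1 \<Longrightarrow> foldr (Eop la) e (SerF i j t) = SerF i j (foldr (Eop la) e t)"
  by (induct e) (simp_all only: foldr_Cons foldr_Nil o_apply id_apply E_SerF)

lemma foldr_E_ComF: "\<bar>i - j\<bar> > 1 \<Longrightarrow> foldr (Eop la) e (ComF i j t) = ComF i j (foldr (Eop la) e t)"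
  by (induct e) (simp_all only: foldr_Cons foldr_Nil o_apply id_apply E_ComF)

lemma SerF_Nil: "SerF i j s [] = 0" by (simp add: SerF_def)
lemma ComF_Nil: "ComF i j s [] = 0" by (simp add: ComF_def)

lemma kerP_SerF: "\<bar>i - j\<bar> = 1 \<Longrightarrow> kerP la (SerF i j t)"
  unfolding kerP_def by (simp only: foldr_E_SerF SerF_Nil) simp

lemma kerP_ComF: "\<bar>i - j\<bar> > 1 \<Longrightarrow> kerP la (ComF i j t)"
  unfolding kerP_def by (simp only: foldr_E_ComF ComF_Nil) simp

definition bnd :: "nat \<Rightarrow> tv \<Rightarrow> bool" where "bnd n t \<longleftrightarrow> (\<forall>u. n \<le> length u \<longrightarrow> t u = 0)"

lemma bnd_Eop: "bnd (Suc n) t \<Longrightarrow> bnd n (Eop la i t)"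
  unfolding bnd_def Eop_def by (auto intro!: sum.neutral)

lemma bnd_0: "bnd 0 t \<Longrightarrow> t = 0"
  unfolding bnd_def by (auto simp: fun_eq_iff)

lemma bnd_foldr: "bnd n t \<Longrightarrow> n \<le> length e \<Longrightarrow> foldr (Eop la) e t = 0"
proof (induct e arbitrary: n t rule: rev_induct)
  case Nil
  have "n = 0" using Nil.prems by simp
  hence "t = 0" using Nil.prems bnd_0 by blast
  thus ?case by simp
next
  case (snoc i e)
  show ?case
  proof (cases n)
    case 0
    hence t0: "t = 0" using snoc.prems(1) bnd_0 by blast
    have "foldr (Eop la) (e @ [i]) t = foldr (Eop la) e (Eop la i t)" by simp
    also have "\<dots> = 0" using t0 Eop_zero foldr_E_zero by metis
    finally show ?thesis .
  next
    case (Suc m)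
    hence "bnd m (Eop la i t)" using snoc bnd_Eop by simp
    moreover have "m \<le> length e" using snoc Suc by simp
    ultimately show ?thesis using snoc by simp
  qed
qed

lemma Tfin_bnd: "t \<in> Tfin \<Longrightarrow> \<exists>n. bnd n t"
proof -
  assume "t \<in> Tfin"
  hence f: "finite (length ` {u. t u \<noteq> 0})" by (simp add: Tfin_def)
  let ?M = "Max (insert 0 (length ` {u. t u \<noteq> 0}))"
  have "bnd (Suc ?M) t" unfolding bnd_def
  proof (intro allI impI)
    fix u :: "int list" assume u: "Suc ?M \<le> length u"
    show "t u = 0"
    proof (rule ccontr)
      assume "t u \<noteq> 0"
      hence "length u \<le> ?M" using f by (intro Max_ge) auto
      thus False using u by simp
    qed
  qed
  thus ?thesis by blast
qed

lemma kerP_hw: assumes "\<And>i. kerP la (Eop la i s)" shows "kerP la (s - sc (s []) (dl []))"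
  unfolding kerP_def
proof
  fix e show "foldr (Eop la) e (s - sc (s []) (dl [])) [] = 0"
  proof (cases e rule: rev_cases)
    case Nil thus ?thesis by (simp add: dl_def)
  next
    case (snoc e' i)
    have "foldr (Eop la) e (s - sc (s []) (dl [])) = foldr (Eop la) e' (Eop la i s)"
      using snoc by (simp add: Eop_diff Eop_sc Eop_dl_Nil sc_0r)
    thus ?thesis using assms[of i] unfolding kerP_def by simp
  qed
qed

lemma top_vec:
  assumes "t \<in> Tfin" "\<not> kerP la t"
  shows "\<exists>e c. c \<noteq> 0 \<and> kerP la (foldr (Eop la) e t - sc c (dl []))"
proof -
  obtain n where n: "bnd n t" using Tfin_bnd[OF assms(1)] by blast
  define P where "P m \<longleftrightarrow> (\<exists>e. length e = m \<and> \<not> kerP la (foldr (Eop la) e t))" for m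
  have P0: "P 0" using assms(2) by (auto simp: P_def)
  have Pb: "P m \<Longrightarrow> m < n" for m
  proof (rule ccontr)
    assume "P m" "\<not> m < n"
    then obtain e where "length e = m" "\<not> kerP la (foldr (Eop la) e t)" by (auto simp: P_def)
    moreover have "foldr (Eop la) e t = 0" using bnd_foldr[OF n] \<open>\<not> m < n\<close> calculation by simp
    ultimately show False using kerP_zero by simp
  qed
  define m where "m = (GREATEST m. P m)"
  have Pm: "P m" unfolding m_def by (rule GreatestI_nat[where k=0 and b=n and P=P, OF P0]) (use Pb in \<open>auto intro: less_imp_le\<close>)
  have Pmax: "\<not> P (Suc m)"
  proof
    assume "P (Suc m)"
    hence "Suc m \<le> m" unfolding m_def by (rule Greatest_le_nat[where b=n]) (use Pb in \<open>auto intro: less_imp_le\<close>)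
    thus False by simp
  qed
  obtain e where e: "length e = m" "\<not> kerP la (foldr (Eop la) e t)" using Pm by (auto simp: P_def)
  define s where "s = foldr (Eop la) e t"
  have ks: "kerP la (Eop la i s)" for i
  proof (rule ccontr)
    assume "\<not> kerP la (Eop la i s)"
    hence "P (Suc m)" unfolding P_def s_def by (rule_tac exI[of _ "i # e"]) (simp add: e)
    thus False using Pmax by simp
  qed
  have k2: "kerP la (s - sc (s []) (dl []))" using kerP_hw ks by blast
  have "s [] \<noteq> 0"
  proof
    assume "s [] = 0"
    hence "kerP la s" using k2 by (simp add: sc_zero)
    thus False using e s_def by simp
  qed
  thus ?thesis using k2 s_def by blast
qed

section \<open>The module L(la)\<close>

definition Psi :: "wt \<Rightarrow> tv \<Rightarrow> (nat \<Rightarrow> qv)" where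
  "Psi la t = (\<lambda>n. foldr (Eop la) (from_nat n) t [])"

definition smL :: "qv \<Rightarrow> (nat \<Rightarrow> qv) \<Rightarrow> (nat \<Rightarrow> qv)" where "smL c g = (\<lambda>n. c * g n)"

lemma vs_smL: "vector_space smL"
  by unfold_locales (simp_all add: smL_def fun_eq_iff algebra_simps)

lemma Psi_zero_iff: "Psi la t = 0 \<longleftrightarrow> kerP la t"
proof
  assume "Psi la t = 0"
  hence "Psi la t (to_nat e) = 0" for e :: "int list" by simp
  thus "kerP la t" unfolding kerP_def Psi_def by simp
next
  assume "kerP la t" thus "Psi la t = 0" unfolding kerP_def Psi_def by (simp add: fun_eq_iff)
qed

lemma Psi_add: "Psi la (t + s) = Psi la t + Psi la s"
  by (simp add: Psi_def fun_eq_iff foldr_E_add)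
lemma Psi_diff: "Psi la (t - s) = Psi la t - Psi la s"
  by (simp add: Psi_def fun_eq_iff foldr_E_diff)
lemma Psi_sc: "Psi la (sc c t) = smL c (Psi la t)"
  by (simp add: Psi_def fun_eq_iff foldr_E_sc smL_def)
lemma Psi_0: "Psi la 0 = 0"
  by (simp add: Psi_zero_iff kerP_zero)

lemma Psi_sum: "Psi la (\<Sum>w\<in>S. f w) = (\<Sum>w\<in>S. Psi la (f w))"
proof (induct S rule: infinite_finite_induct)
  case (infinite A) thus ?case using Psi_0 by (metis sum.infinite)
next
  case empty thus ?case using Psi_0 by (metis sum.empty)
next
  case (insert x F)
  have "Psi la (\<Sum>w\<in>insert x F. f w) = Psi la (f x + (\<Sum>w\<in>F. f w))"
    by (rule arg_cong[where f="Psi la"], rule sum.insert[OF insert(1,2)])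
  also have "\<dots> = Psi la (f x) + (\<Sum>w\<in>F. Psi la (f w))" by (simp only: Psi_add insert(3))
  also have "\<dots> = (\<Sum>w\<in>insert x F. Psi la (f w))" by (rule sum.insert[OF insert(1,2), symmetric])
  finally show ?case .
qed

lemma Psi_eq_iff: "Psi la t = Psi la s \<longleftrightarrow> kerP la (t - s)"
  by (simp add: Psi_zero_iff[symmetric] Psi_diff)

definition good :: "wt \<Rightarrow> (tv \<Rightarrow> tv) \<Rightarrow> bool" where
  "good la X \<longleftrightarrow> lin X \<and> (\<forall>t\<in>Tfin. X t \<in> Tfin) \<and> (\<forall>t. kerP la t \<longrightarrow> kerP la (X t))"

lemma good_E: "good la (Eop la i)"
  by (simp add: good_def lin_Eop Tfin_Eop kerP_Eop)
lemma good_F: "good la (Fop k)"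
  by (simp add: good_def lin_Fop Tfin_Fop kerP_Fop)
lemma good_M: "good la (Mop la f)"
  by (simp add: good_def lin_Mop Tfin_Mop kerP_Mop)

definition liftop :: "wt \<Rightarrow> (tv \<Rightarrow> tv) \<Rightarrow> (nat \<Rightarrow> qv) \<Rightarrow> (nat \<Rightarrow> qv)" where
  "liftop la X g = Psi la (X (inv_into Tfin (Psi la) g))"

lemma liftop_Psi: assumes "good la X" "t \<in> Tfin" shows "liftop la X (Psi la t) = Psi la (X t)"
proof -
  let ?s = "inv_into Tfin (Psi la) (Psi la t)"
  have "Psi la ?s = Psi la t" using assms(2) by (simp add: f_inv_into_f)
  hence "kerP la (?s - t)" by (simp add: Psi_eq_iff)
  have l: "lin X" using assms(1) by (simp add: good_def)
  have "kerP la (X (?s - t))" using assms(1) \<open>kerP la (?s - t)\<close> unfolding good_def by blast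
  hence "kerP la (X ?s - X t)" by (simp only: lin_diff[OF l])
  thus ?thesis unfolding liftop_def by (simp add: Psi_eq_iff)
qed

definition Kop :: "wt \<Rightarrow> int \<Rightarrow> tv \<Rightarrow> tv" where "Kop la i = Mop la (\<lambda>mu. vq powi mu i)"
definition Kiop :: "wt \<Rightarrow> int \<Rightarrow> tv \<Rightarrow> tv" where "Kiop la i = Mop la (\<lambda>mu. vq powi (- mu i))"

definition Lmod :: "wt \<Rightarrow> (nat \<Rightarrow> qv) umod" where
  "Lmod la = \<lparr>carr = Psi la ` Tfin, smult = smL,
     opE = (\<lambda>i. liftop la (Eop la i)), opF = (\<lambda>i. liftop la (Fop i)),
     opK = (\<lambda>i. liftop la (Kop la i)), opKi = (\<lambda>i. liftop la (Kiop la i))\<rparr>"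

lemma good_K: "good la (Kop la i)" by (simp add: Kop_def good_M)
lemma good_Ki: "good la (Kiop la i)" by (simp add: Kiop_def good_M)

lemma Tfin_K: "t \<in> Tfin \<Longrightarrow> Kop la i t \<in> Tfin" by (simp add: Kop_def Tfin_Mop)
lemma Tfin_Ki: "t \<in> Tfin \<Longrightarrow> Kiop la i t \<in> Tfin" by (simp add: Kiop_def Tfin_Mop)

lemmas lift_simps = liftop_Psi[OF good_E] liftop_Psi[OF good_F] liftop_Psi[OF good_K] liftop_Psi[OF good_Ki]
  Tfin_Eop Tfin_Fop Tfin_K Tfin_Ki

lemma subspace_L: "module.subspace smL (Psi la ` Tfin)"
proof -
  interpret vector_space smL by (rule vs_smL)
  show ?thesis
  proof (rule subspaceI)
    show "0 \<in> Psi la ` Tfin" using Psi_0 Tfin_zero by (metis image_eqI)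
    show "x + y \<in> Psi la ` Tfin" if "x \<in> Psi la ` Tfin" "y \<in> Psi la ` Tfin" for x y
      using that by (auto simp: Psi_add[symmetric] intro!: image_eqI Tfin_add)
    show "smL c x \<in> Psi la ` Tfin" if "x \<in> Psi la ` Tfin" for c x
      using that by (auto simp: Psi_sc[symmetric] intro!: image_eqI Tfin_sc)
  qed
qed

lemma lin_on_L: assumes "good la X" shows "lin_on (Lmod la) (liftop la X)"
proof -
  have l: "lin X" and tf: "\<And>t. t \<in> Tfin \<Longrightarrow> X t \<in> Tfin" using assms by (auto simp: good_def)
  have 1: "liftop la X x \<in> Psi la ` Tfin" if "x \<in> Psi la ` Tfin" for x
    using that assms tf by (auto simp: liftop_Psi)
  have 2: "liftop la X (x + y) = liftop la X x + liftop la X y" if xy: "x \<in> Psi la ` Tfin" "y \<in> Psi la ` Tfin" for x y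
  proof -
    obtain t where t1: "t \<in> Tfin" "x = Psi la t" using xy(1) by blast
    obtain s where t2: "s \<in> Tfin" "y = Psi la s" using xy(2) by blast
    note t = t1 t2
    have "liftop la X (x + y) = liftop la X (Psi la (t + s))" using t by (simp add: Psi_add)
    also have "\<dots> = Psi la (X (t + s))" using assms t by (simp add: liftop_Psi Tfin_add)
    also have "\<dots> = Psi la (X t) + Psi la (X s)" using l by (simp add: lin_def Psi_add)
    also have "\<dots> = liftop la X x + liftop la X y" using assms t by (simp add: liftop_Psi)
    finally show ?thesis .
  qed
  have 3: "liftop la X (smL c x) = smL c (liftop la X x)" if xx: "x \<in> Psi la ` Tfin" for x c
  proof -
    obtain t where t: "t \<in> Tfin" "x = Psi la t" using xx by blast
    have "liftop la X (smL c x) = liftop la X (Psi la (sc c t))" using t by (simp add: Psi_sc)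
    also have "\<dots> = Psi la (X (sc c t))" using assms t by (simp add: liftop_Psi Tfin_sc)
    also have "\<dots> = smL c (Psi la (X t))" using l by (simp add: lin_def Psi_sc)
    also have "\<dots> = smL c (liftop la X x)" using assms t by (simp add: liftop_Psi)
    finally show ?thesis .
  qed
  show ?thesis unfolding lin_on_def Lmod_def using 1 2 3 by simp
qed

lemma R_KK: "Kop la i (Kop la j t) = Kop la j (Kop la i t)"
  by (rule ext) (simp add: Kop_def)

lemma R_KKi: "Kop la i (Kiop la i t) = t" "Kiop la i (Kop la i t) = t"
  using vq_nz by (auto simp: Kop_def Kiop_def fun_eq_iff power_int_minus)

lemma R_KE: "Kop la i (Eop la j t) = sc (vq powi (dlt i j - dlt i (j+1))) (Eop la j (Kop la i t))"
  unfolding Kop_def E_M using vq_nz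
  by (rule_tac ext) (simp add: al_def power_int_diff power_int_add field_simps)

lemma R_KF: "Kop la i (Fop j t) = sc (vq powi (dlt i (j+1) - dlt i j)) (Fop j (Kop la i t))"
  unfolding Kop_def F_M using vq_nz
  by (rule_tac ext) (simp add: al_def power_int_diff power_int_add field_simps)

lemma R_EF: "Eop la i (Fop j t) - Fop j (Eop la i t) =
  (if i = j then sc (inverse (vq - inverse vq)) (Kop la i (Kiop la (i+1) t) - Kop la (i+1) (Kiop la i t)) else 0)"
  unfolding E_F by (rule ext) (simp add: Kop_def Kiop_def hsc_def algebra_simps)


lemma Lmod_simps[simp]: "carr (Lmod la) = Psi la ` Tfin" "smult (Lmod la) = smL"
  "opE (Lmod la) = (\<lambda>i. liftop la (Eop la i))" "opF (Lmod la) = (\<lambda>i. liftop la (Fop i))"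
  "opK (Lmod la) = (\<lambda>i. liftop la (Kop la i))" "opKi (Lmod la) = (\<lambda>i. liftop la (Kiop la i))"
  by (simp_all add: Lmod_def)

lemma smL_minus: "smL c x - smL c y = smL c (x - y)" by (simp add: smL_def fun_eq_iff algebra_simps)

lemma rels_L:
  fixes la :: wt and t :: tv
  assumes t: "t \<in> Tfin"
  defines "x \<equiv> Psi la t"
  defines "E \<equiv> \<lambda>i. liftop la (Eop la i)" and "F \<equiv> \<lambda>i. liftop la (Fop i)"
    and "K \<equiv> \<lambda>i. liftop la (Kop la i)" and "Ki \<equiv> \<lambda>i. liftop la (Kiop la i)"
  shows
    "K i (K j x) = K j (K i x)"
    "K i (Ki i x) = x" "Ki i (K i x) = x"
    "K i (E j x) = smL (vq powi (dlt i j - dlt i (j + 1))) (E j (K i x))"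
    "K i (F j x) = smL (vq powi (dlt i (j + 1) - dlt i j)) (F j (K i x))"
    "\<bar>i - j\<bar> > 1 \<Longrightarrow> E i (E j x) = E j (E i x)"
    "\<bar>i - j\<bar> > 1 \<Longrightarrow> F i (F j x) = F j (F i x)"
    "E i (F j x) - F j (E i x) = (if i = j then smL (inverse (vq - inverse vq))
                (K i (Ki (i + 1) x) - K (i + 1) (Ki i x)) else 0)"
    "\<bar>i - j\<bar> = 1 \<Longrightarrow> E i (E i (E j x)) - smL (vq + inverse vq) (E i (E j (E i x))) + E j (E i (E i x)) = 0"
    "\<bar>i - j\<bar> = 1 \<Longrightarrow> F i (F i (F j x)) - smL (vq + inverse vq) (F i (F j (F i x))) + F j (F i (F i x)) = 0"
proof -
  note ls = lift_simps[OF t] lift_simps[OF Tfin_Eop[OF t]] lift_simps[OF Tfin_Fop[OF t]]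
    lift_simps[OF Tfin_K[OF t]] lift_simps[OF Tfin_Ki[OF t]]
    lift_simps[OF Tfin_Eop[OF Tfin_Eop[OF t]]] lift_simps[OF Tfin_Fop[OF Tfin_Fop[OF t]]]
  show "K i (K j x) = K j (K i x)" unfolding x_def K_def by (simp only: ls R_KK)
  show "K i (Ki i x) = x" "Ki i (K i x) = x" unfolding x_def K_def Ki_def by (simp_all only: ls R_KKi)
  show "K i (E j x) = smL (vq powi (dlt i j - dlt i (j + 1))) (E j (K i x))"
    unfolding x_def K_def E_def by (simp only: ls R_KE Psi_sc)
  show "K i (F j x) = smL (vq powi (dlt i (j + 1) - dlt i j)) (F j (K i x))"
    unfolding x_def K_def F_def by (simp only: ls R_KF Psi_sc)
  show "\<bar>i - j\<bar> > 1 \<Longrightarrow> E i (E j x) = E j (E i x)"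
  proof -
    assume a: "\<bar>i - j\<bar> > 1"
    have "Eop la i (Eop la j t) = Eop la j (Eop la i t)"
      using ComE_Tfin[OF a t, of la] by (simp add: ComE_def)
    thus ?thesis unfolding x_def E_def by (simp only: ls)
  qed
  show "\<bar>i - j\<bar> > 1 \<Longrightarrow> F i (F j x) = F j (F i x)"
  proof -
    assume a: "\<bar>i - j\<bar> > 1"
    have "Psi la (Fop i (Fop j t)) = Psi la (Fop j (Fop i t))"
      using kerP_ComF[OF a, of la t] by (simp add: Psi_eq_iff ComF_def)
    thus ?thesis unfolding x_def F_def by (simp only: ls)
  qed
  show "E i (F j x) - F j (E i x) = (if i = j then smL (inverse (vq - inverse vq))
                (K i (Ki (i + 1) x) - K (i + 1) (Ki i x)) else 0)"
    unfolding x_def E_def F_def K_def Ki_def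
    by (simp only: ls Psi_diff[symmetric] R_EF smL_minus Psi_sc[symmetric] Psi_0 if_distrib[of "Psi la"])
  show "\<bar>i - j\<bar> = 1 \<Longrightarrow> E i (E i (E j x)) - smL (vq + inverse vq) (E i (E j (E i x))) + E j (E i (E i x)) = 0"
  proof -
    assume a: "\<bar>i - j\<bar> = 1"
    have "Psi la (SerE la i j t) = 0" using SerE_Tfin[OF a t] Psi_0 by simp
    thus ?thesis unfolding x_def E_def
      by (simp only: ls lift_simps[OF Tfin_Eop[OF Tfin_Eop[OF Tfin_Eop[OF t]]]] SerE_def Psi_add Psi_diff Psi_sc)
  qed
  show "\<bar>i - j\<bar> = 1 \<Longrightarrow> F i (F i (F j x)) - smL (vq + inverse vq) (F i (F j (F i x))) + F j (F i (F i x)) = 0"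
  proof -
    assume a: "\<bar>i - j\<bar> = 1"
    have "Psi la (SerF i j t) = 0" using kerP_SerF[OF a, of la t] Psi_zero_iff by blast
    thus ?thesis unfolding x_def F_def
      by (simp only: ls lift_simps[OF Tfin_Fop[OF Tfin_Fop[OF Tfin_Fop[OF t]]]] SerF_def Psi_add Psi_diff Psi_sc)
  qed
qed


lemma Umod_L: "is_Umod (Lmod la)"
  unfolding is_Umod_def Lmod_simps
  apply (intro conjI allI ballI impI vs_smL subspace_L lin_on_L good_E good_F good_K good_Ki)
  apply ((elim imageE, hypsubst, simp only: rels_L)+)
  done

lemma Tfin_foldrE: "t \<in> Tfin \<Longrightarrow> foldr (Eop la) e t \<in> Tfin"
  by (induct e) (simp_all add: Tfin_Eop)

lemma K_dl0: "Kop la i (dl []) = sc (vq powi la i) (dl [])"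
  by (rule ext) (simp add: Kop_def dl_def wtT_def)

lemma Psi_dl0: "Psi la (dl []) \<noteq> 0"
proof
  assume "Psi la (dl []) = 0"
  hence "Psi la (dl []) (to_nat ([]::int list)) = 0" by simp
  thus False by (simp add: Psi_def dl_def)
qed

lemma irr_L: "irreducible_mod (Lmod la)"
  unfolding irreducible_mod_def
proof (intro conjI allI impI Umod_L)
  interpret vs: vector_space smL by (rule vs_smL)
  show "carr (Lmod la) \<noteq> {0}" using Psi_dl0 dl_Tfin by auto
  fix W assume W: "is_submod (Lmod la) W"
  have Wsub: "W \<subseteq> Psi la ` Tfin" and Wsp: "vs.subspace W"
    and WE: "\<And>i x. x \<in> W \<Longrightarrow> liftop la (Eop la i) x \<in> W"
    and WF: "\<And>i x. x \<in> W \<Longrightarrow> liftop la (Fop i) x \<in> W"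
    using W unfolding is_submod_def by auto
  show "W = {0} \<or> W = carr (Lmod la)"
  proof (cases "W = {0}")
    case True thus ?thesis by simp
  next
    case False
    note \<open>W \<noteq> {0}\<close>
    moreover have "0 \<in> W" using Wsp vs.subspace_0 by blast
    ultimately obtain x where x: "x \<in> W" "x \<noteq> 0" by blast
    then obtain t where t: "t \<in> Tfin" "x = Psi la t" using Wsub by blast
    have nk: "\<not> kerP la t" using x t Psi_zero_iff by blast
    obtain e c where ec: "c \<noteq> 0" "kerP la (foldr (Eop la) e t - sc c (dl []))"
      using top_vec[OF t(1) nk] by blast
    have inW: "Psi la (foldr (Eop la) e' t) \<in> W" for e'
    proof (induct e')
      case Nil thus ?case using x t by simp
    next
      case (Cons i e')
      have "Psi la (foldr (Eop la) (i # e') t) = liftop la (Eop la i) (Psi la (foldr (Eop la) e' t))"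
        using liftop_Psi[OF good_E Tfin_foldrE[OF t(1)]] by simp
      thus ?case using WE Cons by simp
    qed
    have "Psi la (foldr (Eop la) e t) = Psi la (sc c (dl []))" using ec(2) by (simp add: Psi_eq_iff)
    hence "smL c (Psi la (dl [])) \<in> W" using inW[of e] by (simp add: Psi_sc)
    hence "smL (inverse c) (smL c (Psi la (dl []))) \<in> W" using Wsp vs.subspace_scale by blast
    hence d0: "Psi la (dl []) \<in> W" using ec(1) by simp
    have dw: "Psi la (dl w) \<in> W" for w
    proof (induct w)
      case Nil thus ?case using d0 .
    next
      case (Cons k w)
      have "Psi la (dl (k # w)) = liftop la (Fop k) (Psi la (dl w))"
        using liftop_Psi[OF good_F dl_Tfin] by (simp add: Fop_dl)
      thus ?case using WF Cons by simp
    qed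
    have "Psi la s \<in> W" if s: "s \<in> Tfin" for s
    proof -
      have f: "finite {u. s u \<noteq> 0}" using s by (simp add: Tfin_def)
      have "Psi la s = Psi la (\<Sum>w\<in>{u. s u \<noteq> 0}. sc (s w) (dl w))" using decomp[OF f] by simp
      also have "\<dots> = (\<Sum>w\<in>{u. s u \<noteq> 0}. smL (s w) (Psi la (dl w)))" by (simp add: Psi_sum Psi_sc)
      finally show ?thesis using Wsp dw by (simp add: vs.subspace_sum vs.subspace_scale)
    qed
    thus ?thesis using Wsub by auto
  qed
qed

lemma isL_L: "is_L la (Lmod la)"
  unfolding is_L_def
proof (intro conjI irr_L bexI[of _ "Psi la (dl [])"] allI)
  show "Psi la (dl []) \<in> carr (Lmod la)" using dl_Tfin by simp
  show "Psi la (dl []) \<noteq> 0" by (rule Psi_dl0)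
  fix i
  show "opE (Lmod la) i (Psi la (dl [])) = 0"
    using liftop_Psi[OF good_E dl_Tfin] by (simp add: Eop_dl_Nil Psi_0)
  show "opK (Lmod la) i (Psi la (dl [])) = smult (Lmod la) (vq powi la i) (Psi la (dl []))"
    using liftop_Psi[OF good_K dl_Tfin] by (simp add: K_dl0 Psi_sc)
qed

section \<open>General modules\<close>

context
  fixes M :: "'b::ab_group_add umod"
  assumes UM: "is_Umod M"
begin

interpretation vs: vector_space "smult M"
  using UM by (simp add: is_Umod_def)

lemma sub: "vs.subspace (carr M)" using UM by (simp add: is_Umod_def)

lemma carr_0: "0 \<in> carr M" using sub vs.subspace_0 by blast
lemma carr_add: "x \<in> carr M \<Longrightarrow> y \<in> carr M \<Longrightarrow> x + y \<in> carr M" using sub vs.subspace_add by blast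
lemma carr_sm: "x \<in> carr M \<Longrightarrow> smult M c x \<in> carr M" using sub vs.subspace_scale by blast
lemma carr_neg: "x \<in> carr M \<Longrightarrow> - x \<in> carr M" using sub vs.subspace_neg by blast
lemma carr_diff: "x \<in> carr M \<Longrightarrow> y \<in> carr M \<Longrightarrow> x - y \<in> carr M" using sub vs.subspace_diff by blast
lemma carr_sum: "(\<And>w. w \<in> S \<Longrightarrow> f w \<in> carr M) \<Longrightarrow> sum f S \<in> carr M" using sub vs.subspace_sum by blast

lemma linon_carr: "lin_on M f \<Longrightarrow> x \<in> carr M \<Longrightarrow> f x \<in> carr M" by (simp add: lin_on_def)
lemma linon_add: "lin_on M f \<Longrightarrow> x \<in> carr M \<Longrightarrow> y \<in> carr M \<Longrightarrow> f (x + y) = f x + f y" by (simp add: lin_on_def)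
lemma linon_sm: "lin_on M f \<Longrightarrow> x \<in> carr M \<Longrightarrow> f (smult M c x) = smult M c (f x)" by (simp add: lin_on_def)
lemma linon_0: "lin_on M f \<Longrightarrow> f 0 = 0"
  using linon_sm[of f 0 0] carr_0 by simp
lemma linon_diff: "lin_on M f \<Longrightarrow> x \<in> carr M \<Longrightarrow> y \<in> carr M \<Longrightarrow> f (x - y) = f x - f y"
  using linon_add[of f "x - y" y] carr_diff by (simp add: eq_diff_eq)
lemma linon_sum: "lin_on M f \<Longrightarrow> (\<And>w. w \<in> S \<Longrightarrow> g w \<in> carr M) \<Longrightarrow> f (sum g S) = (\<Sum>w\<in>S. f (g w))"
proof (induct S rule: infinite_finite_induct)
  case (infinite A) thus ?case by (simp add: linon_0)
next
  case empty thus ?case by (simp add: linon_0)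
next
  case (insert x F) thus ?case by (simp add: linon_add carr_sum)
qed

lemma lins: "lin_on M (opE M i)" "lin_on M (opF M i)" "lin_on M (opK M i)" "lin_on M (opKi M i)"
  using UM by (simp_all add: is_Umod_def)

lemma rel: assumes "x \<in> carr M" shows
  "opK M i (opK M j x) = opK M j (opK M i x)"
  "opK M i (opKi M i x) = x" "opKi M i (opK M i x) = x"
  "opK M i (opE M j x) = smult M (vq powi (dlt i j - dlt i (j + 1))) (opE M j (opK M i x))"
  "opK M i (opF M j x) = smult M (vq powi (dlt i (j + 1) - dlt i j)) (opF M j (opK M i x))"
  "opE M i (opF M j x) - opF M j (opE M i x) =
          (if i = j then smult M (inverse (vq - inverse vq))
                (opK M i (opKi M (i + 1) x) - opK M (i + 1) (opKi M i x))
           else 0)"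
  using UM assms unfolding is_Umod_def by blast+

lemma wspace_carr: "x \<in> wspace M mu \<Longrightarrow> x \<in> carr M" by (simp add: wspace_def)

lemma wspace_sub: "vs.subspace (wspace M mu)"
proof (rule vs.subspaceI)
  show "0 \<in> wspace M mu" using carr_0 lins(3) by (simp add: wspace_def linon_0)
  show "x + y \<in> wspace M mu" if "x \<in> wspace M mu" "y \<in> wspace M mu" for x y
    using that by (simp add: wspace_def carr_add linon_add[OF lins(3)] vs.scale_right_distrib)
  show "smult M c x \<in> wspace M mu" if "x \<in> wspace M mu" for c x
    using that by (simp add: wspace_def carr_sm linon_sm[OF lins(3)] vs.scale_left_commute)
qed

lemma E_wt: assumes x: "x \<in> wspace M mu" shows "opE M j x \<in> wspace M (\<lambda>i. mu i + al j i)"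
proof -
  have xc: "x \<in> carr M" using x by (simp add: wspace_def)
  have "opK M i (opE M j x) = smult M (vq powi (mu i + al j i)) (opE M j x)" for i
  proof -
    have "opK M i (opE M j x) = smult M (vq powi (al j i)) (opE M j (opK M i x))"
      using rel(4)[OF xc, of i j] by (simp add: al_def)
    also have "\<dots> = smult M (vq powi (al j i)) (opE M j (smult M (vq powi mu i) x))"
      using x by (simp add: wspace_def)
    also have "\<dots> = smult M (vq powi (mu i + al j i)) (opE M j x)"
      using vq_nz xc by (simp add: linon_sm[OF lins(1)] power_int_add mult.commute)
    finally show ?thesis .
  qed
  thus ?thesis using xc by (simp add: wspace_def linon_carr[OF lins(1)])
qed

lemma F_wt: assumes x: "x \<in> wspace M mu" shows "opF M j x \<in> wspace M (\<lambda>i. mu i - al j i)"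
proof -
  have xc: "x \<in> carr M" using x by (simp add: wspace_def)
  have "opK M i (opF M j x) = smult M (vq powi (mu i - al j i)) (opF M j x)" for i
  proof -
    have "opK M i (opF M j x) = smult M (vq powi (- al j i)) (opF M j (opK M i x))"
      using rel(5)[OF xc, of i j] by (simp add: al_def)
    also have "\<dots> = smult M (vq powi (- al j i)) (opF M j (smult M (vq powi mu i) x))"
      using x by (simp add: wspace_def)
    also have "\<dots> = smult M (vq powi (mu i - al j i)) (opF M j x)"
      using vq_nz xc by (simp add: linon_sm[OF lins(2)] power_int_diff power_int_minus field_simps)
    finally show ?thesis .
  qed
  thus ?thesis using xc by (simp add: wspace_def linon_carr[OF lins(2)])
qed

lemma Ki_wt: assumes x: "x \<in> wspace M mu" shows "opKi M i x = smult M (vq powi (- mu i)) x"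
proof -
  have xc: "x \<in> carr M" using x by (simp add: wspace_def)
  have "opKi M i x = opKi M i (smult M (vq powi (- mu i)) (smult M (vq powi mu i) x))"
    using vq_nz by (simp add: power_int_minus)
  also have "\<dots> = opKi M i (smult M (vq powi (- mu i)) (opK M i x))" using x by (simp add: wspace_def)
  also have "\<dots> = smult M (vq powi (- mu i)) x"
    using xc by (simp add: linon_sm[OF lins(4)] linon_carr[OF lins(3)] rel(3))
  finally show ?thesis .
qed

lemma K_wt: "x \<in> wspace M mu \<Longrightarrow> opK M i x = smult M (vq powi (mu i)) x"
  by (simp add: wspace_def)

lemma wt_indep:
  assumes "finite A" "\<And>a. a \<in> A \<Longrightarrow> x a \<in> wspace M a" "(\<Sum>a\<in>A. x a) = 0" "b \<in> A"
  shows "x b = 0"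
  using assms
proof (induct "card A" arbitrary: A x rule: less_induct)
  case less
  show ?case
  proof (cases "A = {b}")
    case True thus ?thesis using less by simp
  next
    case False
    then obtain c where c: "c \<in> A" "c \<noteq> b" using less(5) by blast
    then obtain i where i: "b i \<noteq> c i" by (metis ext)
    define y where "y a = smult M (vq powi (a i) - vq powi (c i)) (x a)" for a
    have yw: "y a \<in> wspace M a" if "a \<in> A" for a
      using less(3)[OF that] wspace_sub vs.subspace_scale unfolding y_def by blast
    have "(\<Sum>a\<in>A. y a) = (\<Sum>a\<in>A. opK M i (x a) - smult M (vq powi (c i)) (x a))"
    proof (rule sum.cong)
      fix a assume a: "a \<in> A"
      show "y a = opK M i (x a) - smult M (vq powi (c i)) (x a)"
        using K_wt[OF less(3)[OF a], of i] by (simp add: y_def vs.scale_left_diff_distrib)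
    qed simp
    also have "\<dots> = opK M i (\<Sum>a\<in>A. x a) - smult M (vq powi (c i)) (\<Sum>a\<in>A. x a)"
    proof -
      have "opK M i (\<Sum>a\<in>A. x a) = (\<Sum>a\<in>A. opK M i (x a))"
        using less(3) wspace_carr by (intro linon_sum[OF lins(3)]) blast
      thus ?thesis by (simp add: sum_subtractf vs.scale_sum_right)
    qed
    also have "\<dots> = 0" using less(4) linon_0[OF lins(3)] by simp
    finally have ys: "(\<Sum>a\<in>A - {c}. y a) = 0"
      using c(1) less(2) by (simp add: sum.remove y_def)
    have "card (A - {c}) < card A" using c(1) less(2) by (meson card_Diff1_less)
    hence "y b = 0" using less(1)[of "A - {c}" y] less(2,5) c yw ys by auto
    moreover have "vq powi (b i) - vq powi (c i) \<noteq> 0" using i vq_powi_inj by auto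
    ultimately show ?thesis unfolding y_def by simp
  qed
qed

end

lemma asum_count: "asum w i = int (count_list w i) - int (count_list w (i - 1))"
  by (induct w) (auto simp: al_eval)

lemma asum_nz: assumes "w \<noteq> []" shows "asum w \<noteq> (\<lambda>i. 0)"
proof
  assume h: "asum w = (\<lambda>i. 0)"
  let ?a = "Max (set w)"
  have a: "?a \<in> set w" using assms by simp
  have "?a + 1 \<notin> set w" using Max_ge[of "set w" "?a + 1"] by fastforce
  hence "asum w (?a + 1) = - int (count_list w ?a)" by (simp add: asum_count)
  moreover have "count_list w ?a \<noteq> 0" using a count_list_0_iff by metis
  ultimately show False using h by (metis of_nat_eq_0_iff neg_equal_0_iff_equal)
qed

lemma wtT_eq_la: "wtT la w = la \<longleftrightarrow> w = []"
proof
  assume "wtT la w = la"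
  hence "asum w = (\<lambda>i. 0)" by (simp add: wtT_def fun_eq_iff)
  thus "w = []" using asum_nz by blast
qed (simp add: wtT_def)

lemma sum_Tfin: "finite S \<Longrightarrow> (\<And>w. w \<in> S \<Longrightarrow> f w \<in> Tfin) \<Longrightarrow> (\<Sum>w\<in>S. f w) \<in> Tfin"
  by (induct S rule: finite_induct) (auto simp: Tfin_zero Tfin_add)

definition Fw :: "'b::ab_group_add umod \<Rightarrow> 'b \<Rightarrow> int list \<Rightarrow> 'b" where
  "Fw M m w = foldr (opF M) w m"

definition pim :: "'b::ab_group_add umod \<Rightarrow> 'b \<Rightarrow> tv \<Rightarrow> 'b" where
  "pim M m t = (\<Sum>w\<in>{u. t u \<noteq> 0}. smult M (t w) (Fw M m w))"

lemma Mop_dl: "Mop la f (dl w) = sc (f (wtT la w)) (dl w)"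
  by (rule ext) (simp add: dl_def)

context
  fixes M :: "'b::ab_group_add umod" and la :: wt and m :: 'b
  assumes UM: "is_Umod M" and mc: "m \<in> carr M"
    and mE: "\<And>i. opE M i m = 0" and mK: "\<And>i. opK M i m = smult M (vq powi la i) m"
begin

interpretation vs: vector_space "smult M"
  using UM by (simp add: is_Umod_def)

lemma m_wt: "m \<in> wspace M la" using mc mK by (simp add: wspace_def)

lemma Fw_wt: "Fw M m w \<in> wspace M (wtT la w)"
proof (induct w)
  case Nil thus ?case using m_wt by (simp add: Fw_def wtT_def)
next
  case (Cons k w)
  thus ?case using F_wt[OF UM Cons] by (simp add: Fw_def wtT_Cons)
qed

lemma Fw_carr: "Fw M m w \<in> carr M" using Fw_wt wspace_carr[OF UM] by blast

lemma pim_gen: assumes "finite S" "{u. t u \<noteq> 0} \<subseteq> S"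
  shows "pim M m t = (\<Sum>w\<in>S. smult M (t w) (Fw M m w))"
  unfolding pim_def by (rule sum.mono_neutral_left) (use assms in auto)

lemma pim_carr: "pim M m t \<in> carr M"
  unfolding pim_def by (intro carr_sum[OF UM] carr_sm[OF UM] Fw_carr)

lemma pim_add: assumes "t \<in> Tfin" "s \<in> Tfin" shows "pim M m (t + s) = pim M m t + pim M m s"
proof -
  let ?S = "{u. t u \<noteq> 0} \<union> {u. s u \<noteq> 0}"
  have f: "finite ?S" using assms by (simp add: Tfin_def)
  have "pim M m (t + s) = (\<Sum>w\<in>?S. smult M ((t + s) w) (Fw M m w))" by (rule pim_gen[OF f]) auto
  also have "\<dots> = (\<Sum>w\<in>?S. smult M (t w) (Fw M m w)) + (\<Sum>w\<in>?S. smult M (s w) (Fw M m w))"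
    by (simp add: vs.scale_left_distrib sum.distrib)
  also have "\<dots> = pim M m t + pim M m s"
    using pim_gen[OF f, of t] pim_gen[OF f, of s] by auto
  finally show ?thesis .
qed

lemma pim_sc: assumes "t \<in> Tfin" shows "pim M m (sc c t) = smult M c (pim M m t)"
proof -
  let ?S = "{u. t u \<noteq> 0}"
  have f: "finite ?S" using assms by (simp add: Tfin_def)
  have "pim M m (sc c t) = (\<Sum>w\<in>?S. smult M (c * t w) (Fw M m w))" by (subst pim_gen[OF f]) auto
  also have "\<dots> = smult M c (pim M m t)" by (simp add: pim_def vs.scale_sum_right)
  finally show ?thesis .
qed

lemma pim_0: "pim M m 0 = 0" unfolding pim_def by simp
lemma pim_0': "pim M m (\<lambda>a. 0) = 0" unfolding pim_def by simp

lemma pim_diff: assumes "t \<in> Tfin" "s \<in> Tfin" shows "pim M m (t - s) = pim M m t - pim M m s"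
proof -
  have "pim M m (t - s) + pim M m s = pim M m t"
    using pim_add[OF Tfin_diff[OF assms] assms(2)] by simp
  thus ?thesis by (simp add: eq_diff_eq)
qed

lemma pim_dl: "pim M m (dl w) = Fw M m w"
proof -
  have "pim M m (dl w) = (\<Sum>u\<in>{w}. smult M (dl w u) (Fw M m u))" by (rule pim_gen) (auto simp: dl_def)
  thus ?thesis by (simp add: dl_def)
qed

lemma pim_lsum: assumes "finite S" "\<And>w. w \<in> S \<Longrightarrow> f w \<in> Tfin"
  shows "pim M m (\<Sum>w\<in>S. sc (c w) (f w)) = (\<Sum>w\<in>S. smult M (c w) (pim M m (f w)))"
  using assms
proof (induct S rule: finite_induct)
  case empty thus ?case by (simp add: pim_0 pim_0')
next
  case (insert x F)
  have T: "(\<Sum>w\<in>F. sc (c w) (f w)) \<in> Tfin"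
    using insert by (intro sum_Tfin Tfin_sc) auto
  have fx: "f x \<in> Tfin" using insert by simp
  have IH: "pim M m (\<Sum>w\<in>F. sc (c w) (f w)) = (\<Sum>w\<in>F. smult M (c w) (pim M m (f w)))"
    using insert(3) insert(4) by blast
  have "pim M m (\<Sum>w\<in>insert x F. sc (c w) (f w)) = pim M m (sc (c x) (f x) + (\<Sum>w\<in>F. sc (c w) (f w)))"
    by (rule arg_cong[where f="pim M m"], rule sum.insert[OF insert(1,2)])
  also have "\<dots> = pim M m (sc (c x) (f x)) + pim M m (\<Sum>w\<in>F. sc (c w) (f w))"
    by (rule pim_add[OF Tfin_sc[OF fx] T])
  also have "\<dots> = smult M (c x) (pim M m (f x)) + (\<Sum>w\<in>F. smult M (c w) (pim M m (f w)))"
    using IH by (simp only: pim_sc[OF fx])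
  also have "\<dots> = (\<Sum>w\<in>insert x F. smult M (c w) (pim M m (f w)))" by (rule sum.insert[OF insert(1,2), symmetric])
  finally show ?case .
qed

lemma pim_hom:
  assumes X: "lin X" "\<And>t. t \<in> Tfin \<Longrightarrow> X t \<in> Tfin" and op: "lin_on M op"
    and b: "\<And>w. pim M m (X (dl w)) = op (Fw M m w)" and t: "t \<in> Tfin"
  shows "pim M m (X t) = op (pim M m t)"
proof -
  let ?S = "{u. t u \<noteq> 0}"
  have f: "finite ?S" using t by (simp add: Tfin_def)
  have "X t = X (\<Sum>w\<in>?S. sc (t w) (dl w))" using decomp[OF f] by simp
  also have "\<dots> = (\<Sum>w\<in>?S. sc (t w) (X (dl w)))" using X(1) by (simp add: lin_sum lin_def)
  finally have "pim M m (X t) = pim M m (\<Sum>w\<in>?S. sc (t w) (X (dl w)))" by simp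
  also have "\<dots> = (\<Sum>w\<in>?S. smult M (t w) (pim M m (X (dl w))))"
    using f X(2) dl_Tfin by (simp add: pim_lsum)
  also have "\<dots> = (\<Sum>w\<in>?S. op (smult M (t w) (Fw M m w)))"
    using b linon_sm[OF UM op] Fw_carr by simp
  also have "\<dots> = op (pim M m t)"
    unfolding pim_def by (rule linon_sum[OF UM op, symmetric]) (simp add: carr_sm[OF UM] Fw_carr)
  finally show ?thesis .
qed

lemma Fw_Cons: "Fw M m (k # w) = opF M k (Fw M m w)" by (simp add: Fw_def)

lemma pim_F_dl: "pim M m (Fop k (dl w)) = opF M k (Fw M m w)"
  by (simp add: Fop_dl pim_dl Fw_Cons)

lemma pim_F: "t \<in> Tfin \<Longrightarrow> pim M m (Fop k t) = opF M k (pim M m t)"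
  by (rule pim_hom[OF lin_Fop Tfin_Fop lins(2)[OF UM] pim_F_dl])

lemma pim_K: "t \<in> Tfin \<Longrightarrow> pim M m (Kop la i t) = opK M i (pim M m t)"
proof (rule pim_hom[OF _ Tfin_K lins(3)[OF UM]])
  show "lin (Kop la i)" by (simp add: Kop_def lin_Mop)
  fix w
  have "pim M m (Kop la i (dl w)) = smult M (vq powi (wtT la w i)) (Fw M m w)"
    by (simp add: Kop_def Mop_dl pim_sc dl_Tfin pim_dl)
  thus "pim M m (Kop la i (dl w)) = opK M i (Fw M m w)" using K_wt[OF UM Fw_wt] by simp
qed

lemma pim_Ki: "t \<in> Tfin \<Longrightarrow> pim M m (Kiop la i t) = opKi M i (pim M m t)"
proof (rule pim_hom[OF _ Tfin_Ki lins(4)[OF UM]])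
  show "lin (Kiop la i)" by (simp add: Kiop_def lin_Mop)
  fix w
  have "pim M m (Kiop la i (dl w)) = smult M (vq powi (- wtT la w i)) (Fw M m w)"
    by (simp add: Kiop_def Mop_dl pim_sc dl_Tfin pim_dl)
  thus "pim M m (Kiop la i (dl w)) = opKi M i (Fw M m w)" using Ki_wt[OF UM Fw_wt] by simp
qed

lemma pim_E_dl: "pim M m (Eop la i (dl w)) = opE M i (Fw M m w)"
proof (induct w)
  case Nil thus ?case by (simp add: Eop_dl_Nil pim_0 pim_0' Fw_def mE)
next
  case (Cons k w)
  let ?y = "Fw M m w"
  have yw: "?y \<in> wspace M (wtT la w)" by (rule Fw_wt)
  have yc: "?y \<in> carr M" by (rule Fw_carr)
  have T1: "Eop la i (dl w) \<in> Tfin" by (simp add: Tfin_Eop dl_Tfin)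
  have "Eop la i (dl (k # w)) = Fop k (Eop la i (dl w)) + (if i = k then sc (hsc (wtT la w) i) (dl w) else 0)"
    by (simp add: Fop_dl[symmetric] E_F Mop_dl)
  hence "pim M m (Eop la i (dl (k # w))) =
      opF M k (opE M i ?y) + (if i = k then smult M (hsc (wtT la w) i) ?y else 0)"
    using T1 Cons by (simp add: pim_add Tfin_Fop Tfin_sc dl_Tfin Tfin_zero pim_F pim_sc pim_dl pim_0)
  also have "\<dots> = opE M i (opF M k ?y)"
  proof -
    have r: "opE M i (opF M k ?y) - opF M k (opE M i ?y) =
          (if i = k then smult M (inverse (vq - inverse vq))
                (opK M i (opKi M (i + 1) ?y) - opK M (i + 1) (opKi M i ?y)) else 0)"
      by (rule rel(6)[OF UM yc])
    have "smult M (inverse (vq - inverse vq)) (opK M i (opKi M (i + 1) ?y) - opK M (i + 1) (opKi M i ?y))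
        = smult M (hsc (wtT la w) i) ?y"
    proof -
      interpret vs: vector_space "smult M" using UM by (simp add: is_Umod_def)
      have "opK M i (opKi M (i + 1) ?y) = smult M (vq powi (wtT la w i) * vq powi (- wtT la w (i+1))) ?y"
        using Ki_wt[OF UM yw] K_wt[OF UM yw] yc by (simp add: linon_sm[OF UM lins(3)[OF UM]] mult_ac)
      moreover have "opK M (i+1) (opKi M i ?y) = smult M (vq powi (wtT la w (i+1)) * vq powi (- wtT la w i)) ?y"
        using Ki_wt[OF UM yw] K_wt[OF UM yw] yc by (simp add: linon_sm[OF UM lins(3)[OF UM]] mult_ac)
      ultimately show ?thesis by (simp add: hsc_def vs.scale_left_diff_distrib[symmetric])
    qed
    hence "opE M i (opF M k ?y) - opF M k (opE M i ?y) = (if i = k then smult M (hsc (wtT la w) i) ?y else 0)"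
      using r by (simp only:)
    hence "opE M i (opF M k ?y) = (if i = k then smult M (hsc (wtT la w) i) ?y else 0) + opF M k (opE M i ?y)"
      by (simp only: diff_eq_eq)
    thus ?thesis by (simp only: add.commute)
  qed
  finally show ?case by (simp add: Fw_Cons)
qed

lemma pim_E: "t \<in> Tfin \<Longrightarrow> pim M m (Eop la i t) = opE M i (pim M m t)"
  by (rule pim_hom[OF lin_Eop Tfin_Eop lins(1)[OF UM] pim_E_dl])

lemma pim_foldrE: "t \<in> Tfin \<Longrightarrow> pim M m (foldr (Eop la) e t) = foldr (opE M) e (pim M m t)"
  by (induct e) (simp_all add: pim_E Tfin_foldrE)

end

context
  fixes M :: "'b::ab_group_add umod" and la :: wt and m :: 'b
  assumes UM: "is_Umod M" and mc: "m \<in> carr M" and mnz: "m \<noteq> 0"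
    and mE: "\<And>i. opE M i m = 0" and mK: "\<And>i. opK M i m = smult M (vq powi la i) m"
    and irr: "irreducible_mod M"
begin

interpretation vs: vector_space "smult M"
  using UM by (simp add: is_Umod_def)

lemma submod_img:
  assumes S: "\<And>t. t \<in> S \<Longrightarrow> t \<in> Tfin" "0 \<in> S" "\<And>t s. t \<in> S \<Longrightarrow> s \<in> S \<Longrightarrow> t + s \<in> S"
    "\<And>t c. t \<in> S \<Longrightarrow> sc c t \<in> S"
    "\<And>t i. t \<in> S \<Longrightarrow> Eop la i t \<in> S" "\<And>t i. t \<in> S \<Longrightarrow> Fop i t \<in> S"
    "\<And>t i. t \<in> S \<Longrightarrow> Kop la i t \<in> S" "\<And>t i. t \<in> S \<Longrightarrow> Kiop la i t \<in> S"
  shows "pim M m ` S = {0} \<or> pim M m ` S = carr M"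
proof -
  have "is_submod M (pim M m ` S)"
    unfolding is_submod_def
  proof (intro conjI allI ballI)
    show "pim M m ` S \<subseteq> carr M" using pim_carr[OF UM mc mE mK] by auto
    show "vs.subspace (pim M m ` S)"
    proof (rule vs.subspaceI)
      show "0 \<in> pim M m ` S" using S(2) pim_0[OF UM mc mE mK] by (metis image_eqI)
      show "x + y \<in> pim M m ` S" if xy: "x \<in> pim M m ` S" "y \<in> pim M m ` S" for x y
      proof -
        obtain t where t: "t \<in> S" "x = pim M m t" using xy(1) by blast
        obtain s where s: "s \<in> S" "y = pim M m s" using xy(2) by blast
        have "x + y = pim M m (t + s)" using t s S(1) pim_add[OF UM mc mE mK] by simp
        thus ?thesis using S(3)[OF t(1) s(1)] by blast
      qed
      show "smult M c x \<in> pim M m ` S" if xx: "x \<in> pim M m ` S" for c x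
      proof -
        obtain t where t: "t \<in> S" "x = pim M m t" using xx by blast
        have "smult M c x = pim M m (sc c t)" using t S(1) pim_sc[OF UM mc mE mK] by simp
        thus ?thesis using S(4)[OF t(1)] by blast
      qed
    qed
    fix i x assume "x \<in> pim M m ` S"
    then obtain t where t: "t \<in> S" "x = pim M m t" by blast
    have tf: "t \<in> Tfin" using S(1) t by simp
    show "opE M i x \<in> pim M m ` S" using t S(5) by (simp add: pim_E[OF UM mc mE mK tf, symmetric])
    show "opF M i x \<in> pim M m ` S" using t S(6) by (simp add: pim_F[OF UM mc mE mK tf, symmetric])
    show "opK M i x \<in> pim M m ` S" using t S(7) by (simp add: pim_K[OF UM mc mE mK tf, symmetric])
    show "opKi M i x \<in> pim M m ` S" using t S(8) by (simp add: pim_Ki[OF UM mc mE mK tf, symmetric])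
  qed
  thus ?thesis using irr unfolding irreducible_mod_def by blast
qed

lemma pim_surj: "pim M m ` Tfin = carr M"
proof -
  have "pim M m ` Tfin = {0} \<or> pim M m ` Tfin = carr M"
    by (rule submod_img) (auto simp: Tfin_zero Tfin_add Tfin_sc Tfin_Eop Tfin_Fop Tfin_K Tfin_Ki)
  moreover have "m \<in> pim M m ` Tfin"
  proof (rule image_eqI[OF _ dl_Tfin])
    show "m = pim M m (dl [])" using pim_dl[OF UM mc mE mK, of "[]"] by (simp add: Fw_def)
  qed
  ultimately show ?thesis using mnz by auto
qed

lemma ker_sub: assumes t: "t \<in> Tfin" "kerP la t" shows "pim M m t = 0"
proof -
  let ?S = "{t. t \<in> Tfin \<and> kerP la t}"
  have "pim M m ` ?S = {0} \<or> pim M m ` ?S = carr M"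
    by (rule submod_img)
       (auto simp: Tfin_zero Tfin_add Tfin_sc Tfin_Eop Tfin_Fop Tfin_K Tfin_Ki kerP_zero kerP_add kerP_sc
        kerP_Eop kerP_Fop Kop_def Kiop_def kerP_Mop Tfin_Mop)
  moreover have "pim M m ` ?S \<noteq> carr M"
  proof
    assume "pim M m ` ?S = carr M"
    hence "m \<in> pim M m ` ?S" using mc by simp
    then obtain r where r: "r \<in> Tfin" "kerP la r" "m = pim M m r" by blast
    have r0: "r [] = 0" using r(2) unfolding kerP_def by (drule_tac x="[]" in spec) simp
    let ?S = "{u. r u \<noteq> 0}"
    have fS: "finite ?S" using r by (simp add: Tfin_def)
    let ?g = "\<lambda>w. smult M (r w) (Fw M m w)"
    define y where "y nu = (\<Sum>w\<in>{w\<in>?S. wtT la w = nu}. ?g w)" for nu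
    have pr: "pim M m r = (\<Sum>nu\<in>wtT la ` ?S. y nu)" unfolding pim_def y_def
      by (rule sum.image_gen[OF fS])
    have lan: "la \<notin> wtT la ` ?S"
    proof
      assume "la \<in> wtT la ` ?S"
      then obtain w where w: "r w \<noteq> 0" "wtT la w = la" by auto
      hence "w = []" using wtT_eq_la by blast
      thus False using w r0 by simp
    qed
    define x where "x nu = (if nu = la then - m else y nu)" for nu
    have fA: "finite (wtT la ` ?S)" using fS by simp
    have "(\<Sum>nu\<in>insert la (wtT la ` ?S). x nu) = x la + (\<Sum>nu\<in>wtT la ` ?S. x nu)"
      by (rule sum.insert[OF fA lan])
    also have "(\<Sum>nu\<in>wtT la ` ?S. x nu) = (\<Sum>nu\<in>wtT la ` ?S. y nu)"
    proof (rule sum.cong)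
      fix nu assume "nu \<in> wtT la ` ?S"
      hence "nu \<noteq> la" using lan by blast
      thus "x nu = y nu" by (simp add: x_def)
    qed simp
    finally have "(\<Sum>nu\<in>insert la (wtT la ` ?S). x nu) = - m + (\<Sum>nu\<in>wtT la ` ?S. y nu)"
      by (simp add: x_def)
    also have "\<dots> = 0" using pr r(3) by simp
    finally have xs: "(\<Sum>nu\<in>insert la (wtT la ` ?S). x nu) = 0" .
    have xw: "x nu \<in> wspace M nu" if "nu \<in> insert la (wtT la ` ?S)" for nu
    proof (cases "nu = la")
      case True thus ?thesis
        using m_wt[OF UM mc mE mK] wspace_sub[OF UM] vs.subspace_neg by (simp add: x_def)
    next
      case False
      have "y nu \<in> wspace M nu" unfolding y_def
      proof (intro vs.subspace_sum[OF wspace_sub[OF UM]])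
        fix w assume "w \<in> {w \<in> ?S. wtT la w = nu}"
        hence "Fw M m w \<in> wspace M nu" using Fw_wt[OF UM mc mE mK, of w] by simp
        thus "?g w \<in> wspace M nu" using wspace_sub[OF UM] vs.subspace_scale by blast
      qed
      thus ?thesis using False by (simp add: x_def)
    qed
    have "x la = 0" by (rule wt_indep[OF UM _ xw xs]) (use fS in auto)
    thus False using mnz by (simp add: x_def)
  qed
  ultimately have "pim M m ` ?S = {0}" by blast
  thus ?thesis using t by blast
qed

lemma foldr_opE_0: "foldr (opE M) e 0 = 0"
  by (induct e) (simp_all add: linon_0[OF UM lins(1)[OF UM]])

lemma ker_eq: assumes t: "t \<in> Tfin" shows "pim M m t = 0 \<longleftrightarrow> kerP la t"
proof
  assume p0: "pim M m t = 0"
  show "kerP la t"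
  proof (rule ccontr)
    assume "\<not> kerP la t"
    then obtain e c where ec: "c \<noteq> 0" "kerP la (foldr (Eop la) e t - sc c (dl []))"
      using top_vec[OF t] by blast
    have T1: "foldr (Eop la) e t \<in> Tfin" by (rule Tfin_foldrE[OF t])
    have T2: "sc c (dl []) \<in> Tfin" by (simp add: Tfin_sc dl_Tfin)
    have "pim M m (foldr (Eop la) e t - sc c (dl [])) = 0"
      by (rule ker_sub[OF Tfin_diff[OF T1 T2] ec(2)])
    hence "pim M m (foldr (Eop la) e t) - smult M c m = 0"
      using pim_diff[OF UM mc mE mK T1 T2] pim_sc[OF UM mc mE mK dl_Tfin] pim_dl[OF UM mc mE mK]
      by (simp add: Fw_def)
    moreover have "pim M m (foldr (Eop la) e t) = 0"
      using pim_foldrE[OF UM mc mE mK t] p0 foldr_opE_0 by simp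
    ultimately have "smult M c m = 0" by simp
    thus False using ec(1) mnz by simp
  qed
next
  assume "kerP la t" thus "pim M m t = 0" using ker_sub t by blast
qed

lemma hw_unique:
  assumes t: "t \<in> Tfin" and y: "pim M m t \<noteq> 0" and E0: "\<And>i. opE M i (pim M m t) = 0"
  shows "\<exists>c. c \<noteq> 0 \<and> pim M m t = smult M c m"
proof -
  have "kerP la (Eop la i t)" for i
    using ker_eq[OF Tfin_Eop[OF t]] E0 pim_E[OF UM mc mE mK t] by simp
  hence k: "kerP la (t - sc (t []) (dl []))" by (rule kerP_hw)
  have T2: "sc (t []) (dl []) \<in> Tfin" by (simp add: Tfin_sc dl_Tfin)
  have "pim M m (t - sc (t []) (dl [])) = 0" using ker_eq[OF Tfin_diff[OF t T2]] k by simp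
  hence e: "pim M m t = smult M (t []) m"
    using pim_diff[OF UM mc mE mK t T2] pim_sc[OF UM mc mE mK dl_Tfin] pim_dl[OF UM mc mE mK]
    by (simp add: Fw_def)
  moreover have "t [] \<noteq> 0" using e y by auto
  ultimately show ?thesis by blast
qed

end

lemma isL_unfold:
  assumes "is_L la M"
  obtains m where "is_Umod M" "m \<in> carr M" "m \<noteq> 0" "\<And>i. opE M i m = 0"
    "\<And>i. opK M i m = smult M (vq powi la i) m" "irreducible_mod M"
  using assms unfolding is_L_def irreducible_mod_def by blast

lemma iso_same:
  fixes M :: "'b::ab_group_add umod" and N :: "'c::ab_group_add umod"
  assumes LM: "is_L la M" and LN: "is_L la N"
  shows "mod_iso M N"
proof -
  obtain m where M: "is_Umod M" "m \<in> carr M" "m \<noteq> 0" "\<And>i. opE M i m = 0"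
    "\<And>i. opK M i m = smult M (vq powi la i) m" "irreducible_mod M" using isL_unfold[OF LM] by blast
  obtain n where N: "is_Umod N" "n \<in> carr N" "n \<noteq> 0" "\<And>i. opE N i n = 0"
    "\<And>i. opK N i n = smult N (vq powi la i) n" "irreducible_mod N" using isL_unfold[OF LN] by blast
  let ?pM = "pim M m" and ?pN = "pim N n"
  note sM = pim_surj[OF M] and sN = pim_surj[OF N]
  note kM = ker_eq[OF M] and kN = ker_eq[OF N]
  define phi where "phi x = ?pN (inv_into Tfin ?pM x)" for x
  have key: "phi (?pM t) = ?pN t" if t: "t \<in> Tfin" for t
  proof -
    let ?s = "inv_into Tfin ?pM (?pM t)"
    have s: "?s \<in> Tfin" using t by (simp add: inv_into_into)
    have "?pM ?s = ?pM t" using t by (simp add: f_inv_into_f)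
    hence "?pM (?s - t) = 0" using pim_diff[OF M(1-2,4-5) s t] by simp
    hence "kerP la (?s - t)" using kM[OF Tfin_diff[OF s t]] by simp
    hence "?pN (?s - t) = 0" using kN[OF Tfin_diff[OF s t]] by simp
    hence "?pN ?s = ?pN t" using pim_diff[OF N(1-2,4-5) s t] by simp
    thus ?thesis unfolding phi_def .
  qed
  show ?thesis unfolding mod_iso_def
  proof (intro exI[of _ phi] conjI allI ballI)
    show "bij_betw phi (carr M) (carr N)" unfolding bij_betw_def
    proof
      show "inj_on phi (carr M)"
      proof (rule inj_onI)
        fix x y assume "x \<in> carr M" "y \<in> carr M" and e: "phi x = phi y"
        then obtain t s where t: "t \<in> Tfin" "x = ?pM t" and s: "s \<in> Tfin" "y = ?pM s"
          using sM by blast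
        have "?pN t = ?pN s" using e t s key by simp
        hence "?pN (t - s) = 0" using pim_diff[OF N(1-2,4-5) t(1) s(1)] by simp
        hence "kerP la (t - s)" using kN[OF Tfin_diff[OF t(1) s(1)]] by simp
        hence "?pM (t - s) = 0" using kM[OF Tfin_diff[OF t(1) s(1)]] by simp
        thus "x = y" using pim_diff[OF M(1-2,4-5) t(1) s(1)] t s by simp
      qed
      have "phi ` carr M = phi ` ?pM ` Tfin" using sM by simp
      also have "\<dots> = ?pN ` Tfin" using key by (auto simp: image_iff)
      finally show "phi ` carr M = carr N" using sN by simp
    qed
    fix x assume "x \<in> carr M"
    then obtain t where t: "t \<in> Tfin" "x = ?pM t" using sM by blast
    { fix y assume "y \<in> carr M"
      then obtain s where s: "s \<in> Tfin" "y = ?pM s" using sM by blast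
      have "phi (x + y) = phi (?pM (t + s))" using t s pim_add[OF M(1-2,4-5) t(1) s(1)] by simp
      also have "\<dots> = ?pN (t + s)" by (rule key[OF Tfin_add[OF t(1) s(1)]])
      also have "\<dots> = phi x + phi y" using t s key pim_add[OF N(1-2,4-5) t(1) s(1)] by simp
      finally show "phi (x + y) = phi x + phi y" . }
    fix c
    have "phi (smult M c x) = phi (?pM (sc c t))" using t pim_sc[OF M(1-2,4-5) t(1)] by simp
    also have "\<dots> = ?pN (sc c t)" by (rule key[OF Tfin_sc[OF t(1)]])
    also have "\<dots> = smult N c (phi x)" using t key pim_sc[OF N(1-2,4-5) t(1)] by simp
    finally show "phi (smult M c x) = smult N c (phi x)" .
  next
    fix i x assume "x \<in> carr M"
    then obtain t where t: "t \<in> Tfin" "x = ?pM t" using sM by blast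
    have "phi (opE M i x) = phi (?pM (Eop la i t))" using t pim_E[OF M(1-2,4-5) t(1)] by simp
    also have "\<dots> = ?pN (Eop la i t)" by (rule key[OF Tfin_Eop[OF t(1)]])
    also have "\<dots> = opE N i (phi x)" using t key pim_E[OF N(1-2,4-5) t(1)] by simp
    finally show "phi (opE M i x) = opE N i (phi x)" .
    have "phi (opF M i x) = phi (?pM (Fop i t))" using t pim_F[OF M(1-2,4-5) t(1)] by simp
    also have "\<dots> = ?pN (Fop i t)" by (rule key[OF Tfin_Fop[OF t(1)]])
    also have "\<dots> = opF N i (phi x)" using t key pim_F[OF N(1-2,4-5) t(1)] by simp
    finally show "phi (opF M i x) = opF N i (phi x)" .
    have "phi (opK M i x) = phi (?pM (Kop la i t))" using t pim_K[OF M(1-2,4-5) t(1)] by simp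
    also have "\<dots> = ?pN (Kop la i t)" by (rule key[OF Tfin_K[OF t(1)]])
    also have "\<dots> = opK N i (phi x)" using t key pim_K[OF N(1-2,4-5) t(1)] by simp
    finally show "phi (opK M i x) = opK N i (phi x)" .
    have "phi (opKi M i x) = phi (?pM (Kiop la i t))" using t pim_Ki[OF M(1-2,4-5) t(1)] by simp
    also have "\<dots> = ?pN (Kiop la i t)" by (rule key[OF Tfin_Ki[OF t(1)]])
    also have "\<dots> = opKi N i (phi x)" using t key pim_Ki[OF N(1-2,4-5) t(1)] by simp
    finally show "phi (opKi M i x) = opKi N i (phi x)" .
  qed
qed

lemma iso_same_wt:
  fixes M :: "'b::ab_group_add umod" and N :: "'c::ab_group_add umod"
  assumes LM: "is_L la M" and LN: "is_L mu N" and iso: "mod_iso M N"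
  shows "la = mu"
proof -
  obtain m where M: "is_Umod M" "m \<in> carr M" "m \<noteq> 0" "\<And>i. opE M i m = 0"
    "\<And>i. opK M i m = smult M (vq powi la i) m" "irreducible_mod M" using isL_unfold[OF LM] by blast
  obtain n where N: "is_Umod N" "n \<in> carr N" "n \<noteq> 0" "\<And>i. opE N i n = 0"
    "\<And>i. opK N i n = smult N (vq powi mu i) n" "irreducible_mod N" using isL_unfold[OF LN] by blast
  interpret vM: vector_space "smult M" using M(1) by (simp add: is_Umod_def)
  interpret vN: vector_space "smult N" using N(1) by (simp add: is_Umod_def)
  from iso obtain phi where bij: "bij_betw phi (carr M) (carr N)"
    and H1: "\<forall>x\<in>carr M. \<forall>y\<in>carr M. phi (x + y) = phi x + phi y"
    and H2: "\<forall>c. \<forall>x\<in>carr M. phi (smult M c x) = smult N c (phi x)"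
    and H3: "\<forall>i. \<forall>x\<in>carr M. phi (opE M i x) = opE N i (phi x) \<and> phi (opF M i x) = opF N i (phi x) \<and>
                     phi (opK M i x) = opK N i (phi x) \<and> phi (opKi M i x) = opKi N i (phi x)"
    unfolding mod_iso_def by (elim exE conjE) (rule that)
  have ad: "\<And>x y. x \<in> carr M \<Longrightarrow> y \<in> carr M \<Longrightarrow> phi (x + y) = phi x + phi y" using H1 by blast
  have sm: "\<And>c x. x \<in> carr M \<Longrightarrow> phi (smult M c x) = smult N c (phi x)" using H2 by blast
  have pE: "\<And>i x. x \<in> carr M \<Longrightarrow> phi (opE M i x) = opE N i (phi x)" using H3 by blast
  have pK: "\<And>i x. x \<in> carr M \<Longrightarrow> phi (opK M i x) = opK N i (phi x)" using H3 by blast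
  have inj: "inj_on phi (carr M)" and img: "phi ` carr M = carr N" using bij by (auto simp: bij_betw_def)
  have "phi (0 + 0) = phi 0 + phi 0" by (rule ad[OF carr_0[OF M(1)] carr_0[OF M(1)]])
  hence "phi 0 + phi 0 = phi 0 + 0" by (simp only: add_0_left add_0_right)
  hence p0: "phi 0 = 0" by (rule add_left_imp_eq)
  have "n \<in> phi ` carr M" using img N(2) by (simp only:)
  then obtain y where y: "y \<in> carr M" "phi y = n" by (rule imageE) (rule that, simp_all)
  have ynz: "y \<noteq> 0" using y p0 N(3) by auto
  have yE: "opE M i y = 0" for i
  proof -
    have "phi (opE M i y) = phi 0" using pE[OF y(1)] y(2) N(4) p0 by simp
    thus ?thesis using inj linon_carr[OF M(1) lins(1)[OF M(1)] y(1)] carr_0[OF M(1)]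
      by (auto dest: inj_onD)
  qed
  have yK: "opK M i y = smult M (vq powi mu i) y" for i
  proof -
    have "phi (opK M i y) = phi (smult M (vq powi mu i) y)" using pK[OF y(1)] y(2) N(5) sm[OF y(1)] by simp
    thus ?thesis using inj linon_carr[OF M(1) lins(3)[OF M(1)] y(1)] carr_sm[OF M(1) y(1)]
      by (auto dest: inj_onD)
  qed
  obtain t where t: "t \<in> Tfin" "y = pim M m t" using pim_surj[OF M] y(1) by blast
  obtain c where c: "c \<noteq> 0" "y = smult M c m"
    using hw_unique[OF M t(1)] t ynz yE by auto
  show ?thesis
  proof
    fix i
    have "opK M i y = smult M (vq powi la i) y"
      using c M(2) M(5) by (simp add: linon_sm[OF M(1) lins(3)[OF M(1)]] vM.scale_left_commute)
    hence "smult M (vq powi la i) y = smult M (vq powi mu i) y" using yK[of i] by (rule trans[OF sym])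
    hence "vq powi la i = vq powi mu i" using ynz vM.scale_cancel_right by blast
    thus "la i = mu i" using vq_powi_inj by blast
  qed
qed

section \<open>Finiteness of words of a given weight\<close>

lemma asum_lensum:
  assumes "set w \<subseteq> {lo..hi}"
  shows "(\<Sum>j\<in>{lo..hi+1}. j * asum w j) = - int (length w)"
  using assms
proof (induct w)
  case Nil thus ?case by simp
next
  case (Cons a w)
  have a: "a \<in> {lo..hi+1}" "a + 1 \<in> {lo..hi+1}" using Cons.prems by auto
  have "(\<Sum>j\<in>{lo..hi+1}. j * asum (a # w) j) =
      (\<Sum>j\<in>{lo..hi+1}. (if j = a then j else 0)) - (\<Sum>j\<in>{lo..hi+1}. (if j = a + 1 then j else 0))
      + (\<Sum>j\<in>{lo..hi+1}. j * asum w j)"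
    by (simp add: al_eval algebra_simps sum.distrib sum_subtractf if_distrib[of "\<lambda>x. _ * x"] cong: if_cong)
  also have "\<dots> = a - (a + 1) + (- int (length w))"
    using a Cons by (simp add: sum.delta)
  finally show ?case by simp
qed

lemma count_pos: "x \<in> set w \<Longrightarrow> count_list w x > 0"
  using count_list_0_iff by fastforce

lemma finite_asum: "finite {w. asum w = d}"
proof (cases "\<exists>w0. asum w0 = d")
  case False thus ?thesis by simp
next
  case True
  then obtain w0 where w0: "asum w0 = d" by blast
  let ?D = "{j. d j \<noteq> 0}"
  have "?D \<subseteq> set w0 \<union> (\<lambda>a. a + 1) ` set w0"
  proof
    fix j assume "j \<in> ?D"
    hence "count_list w0 j \<noteq> 0 \<or> count_list w0 (j - 1) \<noteq> 0" using w0 by (auto simp: asum_count)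
    hence "j \<in> set w0 \<or> j - 1 \<in> set w0" using count_list_0_iff by metis
    thus "j \<in> set w0 \<union> (\<lambda>a. a + 1) ` set w0" by (auto intro: image_eqI[of _ _ "j - 1"])
  qed
  hence fD: "finite ?D" by (rule finite_subset) simp
  define lo where "lo = Min ?D"
  define hi where "hi = Max ?D"
  define N where "N = nat (- (\<Sum>j\<in>{lo..hi+1}. j * d j))"
  have "{w. asum w = d} \<subseteq> {w. set w \<subseteq> {lo..hi} \<and> length w = N}"
  proof (rule subsetI)
    fix w assume "w \<in> {w. asum w = d}"
    hence wd: "asum w = d" by simp
    have sw: "set w \<subseteq> {lo..hi}"
    proof (cases "w = []")
      case True thus ?thesis by simp
    next
      case False
      let ?a = "Min (set w)" and ?b = "Max (set w)"
      have "?a \<in> set w" "?b \<in> set w" using False by simp_all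
      have "?a - 1 \<notin> set w" using Min_le[of "set w" "?a - 1"] by fastforce
      hence "asum w ?a = int (count_list w ?a)" by (simp add: asum_count)
      hence aD: "?a \<in> ?D" using count_pos[OF \<open>?a \<in> set w\<close>] wd by auto
      have "?b + 1 \<notin> set w" using Max_ge[of "set w" "?b + 1"] by fastforce
      hence "asum w (?b + 1) = - int (count_list w ?b)" by (simp add: asum_count)
      hence bD: "?b + 1 \<in> ?D" using count_pos[OF \<open>?b \<in> set w\<close>] wd by auto
      have h1: "lo \<le> ?a" unfolding lo_def using aD fD by simp
      have h2: "?b + 1 \<le> hi" unfolding hi_def using bD fD by simp
      show ?thesis
      proof (intro subsetI)
        fix x assume h: "x \<in> set w"
        have m: "?a \<le> x" "x \<le> ?b" using h by simp_all
        show "x \<in> {lo..hi}" unfolding atLeastAtMost_iff using h1 h2 m by linarith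
      qed
    qed
    moreover have "length w = N"
      using asum_lensum[OF sw] wd unfolding N_def by simp
    ultimately show "w \<in> {w. set w \<subseteq> {lo..hi} \<and> length w = N}" by blast
  qed
  moreover have "finite {w. set w \<subseteq> {lo..hi} \<and> length w = N}" by (rule finite_lists_length_eq) simp
  ultimately show ?thesis by (rule finite_subset)
qed

lemma finite_wt: "finite {w. wtT la w = nu}"
proof -
  have "{w. wtT la w = nu} = {w. asum w = (\<lambda>i. la i - nu i)}"
    by (auto simp: wtT_def fun_eq_iff algebra_simps)
  thus ?thesis using finite_asum by simp
qed

definition yv :: "'b::ab_group_add umod \<Rightarrow> 'b \<Rightarrow> wt \<Rightarrow> tv \<Rightarrow> wt \<Rightarrow> 'b" where
  "yv M m la t nu = (\<Sum>w\<in>{w \<in> {u. t u \<noteq> 0}. wtT la w = nu}. smult M (t w) (Fw M m w))"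

context
  fixes M :: "'b::ab_group_add umod" and la :: wt and m :: 'b
  assumes UM: "is_Umod M" and mc: "m \<in> carr M" and mnz: "m \<noteq> 0"
    and mE: "\<And>i. opE M i m = 0" and mK: "\<And>i. opK M i m = smult M (vq powi la i) m"
    and irr: "irreducible_mod M"
begin

interpretation vs: vector_space "smult M"
  using UM by (simp add: is_Umod_def)

lemma pim_decomp: assumes "t \<in> Tfin" shows "pim M m t = (\<Sum>nu\<in>wtT la ` {u. t u \<noteq> 0}. yv M m la t nu)"
proof -
  have fS: "finite {u. t u \<noteq> 0}" using assms by (simp add: Tfin_def)
  show ?thesis unfolding pim_def yv_def
    using sum.image_gen[OF fS, of "\<lambda>w. smult M (t w) (Fw M m w)" "wtT la"] by simp
qed

lemma yv_wt: "yv M m la t nu \<in> wspace M nu"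
  unfolding yv_def
proof (intro vs.subspace_sum[OF wspace_sub[OF UM]])
  fix w assume "w \<in> {w \<in> {u. t u \<noteq> 0}. wtT la w = nu}"
  hence "Fw M m w \<in> wspace M nu" using Fw_wt[OF UM mc mE mK, of w] by simp
  thus "smult M (t w) (Fw M m w) \<in> wspace M nu" using wspace_sub[OF UM] vs.subspace_scale by blast
qed

lemma isL_weight: "weight_module M"
  unfolding weight_module_def
proof (intro conjI UM ballI)
  fix x assume "x \<in> carr M"
  then obtain t where t: "t \<in> Tfin" "x = pim M m t" using pim_surj[OF UM mc mnz mE mK irr] by blast
  show "\<exists>S f. finite S \<and> (\<forall>\<mu>\<in>S. f \<mu> \<in> wspace M \<mu>) \<and> x = sum f S"
    using t pim_decomp yv_wt by (intro exI[of _ "wtT la ` {u. t u \<noteq> 0}"] exI[of _ "yv M m la t"])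
      (auto simp: Tfin_def)
qed

lemma isL_Chi: "in_Chi M"
  unfolding in_Chi_def
proof (intro conjI isL_weight ballI)
  fix x assume "x \<in> carr M"
  then obtain t where t: "t \<in> Tfin" "x = pim M m t" using pim_surj[OF UM mc mnz mE mK irr] by blast
  obtain n where n: "bnd n t" using Tfin_bnd[OF t(1)] by blast
  show "\<exists>n0. \<forall>w. n0 \<le> length w \<longrightarrow> foldr (opE M) w x = 0"
  proof (intro exI[of _ n] allI impI)
    fix w :: "int list" assume "n \<le> length w"
    hence z: "foldr (Eop la) w t = 0" using bnd_foldr[OF n] by blast
    have "foldr (opE M) w x = pim M m (foldr (Eop la) w t)" using pim_foldrE[OF UM mc mE mK t(1), of w] t(2) by simp
    thus "foldr (opE M) w x = 0" using z pim_0[OF UM mc mE mK] by simp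
  qed
qed

lemma wspace_in_span:
  assumes x: "x \<in> wspace M nu"
  shows "x \<in> vs.span (Fw M m ` {w. wtT la w = nu})"
proof -
  have xc: "x \<in> carr M" using x wspace_carr[OF UM] by blast
  then obtain t where t: "t \<in> Tfin" "x = pim M m t" using pim_surj[OF UM mc mnz mE mK irr] by blast
  let ?A' = "wtT la ` {u. t u \<noteq> 0}"
  let ?A = "insert nu ?A'"
  have fA: "finite ?A" using t by (simp add: Tfin_def)
  define g where "g nu' = yv M m la t nu' - (if nu' = nu then x else 0)" for nu'
  have gw: "g nu' \<in> wspace M nu'" if "nu' \<in> ?A" for nu'
    unfolding g_def using yv_wt x wspace_sub[OF UM] vs.subspace_diff vs.subspace_0 by auto
  have z: "yv M m la t nu' = 0" if "nu' \<notin> ?A'" for nu'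
    unfolding yv_def using that by (intro sum.neutral) auto
  have "(\<Sum>nu'\<in>?A. g nu') = (\<Sum>nu'\<in>?A. yv M m la t nu') - (\<Sum>nu'\<in>?A. (if nu' = nu then x else 0))"
    unfolding g_def by (simp add: sum_subtractf)
  also have "(\<Sum>nu'\<in>?A. (if nu' = nu then x else 0)) = x" using fA by (simp add: sum.delta)
  also have "(\<Sum>nu'\<in>?A. yv M m la t nu') = (\<Sum>nu'\<in>?A'. yv M m la t nu')"
    by (rule sum.mono_neutral_right) (use fA z in auto)
  also have "\<dots> = x" using pim_decomp[OF t(1)] t(2) by simp
  finally have s0: "(\<Sum>nu'\<in>?A. g nu') = 0" by simp
  have "g nu = 0" using wt_indep[OF UM fA gw s0] by simp
  hence xe: "x = yv M m la t nu" by (simp add: g_def)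
  show ?thesis unfolding xe yv_def
    by (intro vs.span_sum vs.span_scale vs.span_base) auto
qed

lemma isL_O: "in_O M"
  unfolding in_O_def
proof (intro conjI isL_weight allI)
  fix nu
  show "\<exists>B. finite B \<and> wspace M nu \<subseteq> vs.span B"
    using wspace_in_span finite_wt by (intro exI[of _ "Fw M m ` {w. wtT la w = nu}"]) auto
next
  show "\<exists>Las. finite Las \<and> wts M \<subseteq> {\<mu>. \<exists>la\<in>Las. le_wt \<mu> la}"
  proof (intro exI[of _ "{la}"] conjI subsetI)
    fix mu assume "mu \<in> wts M"
    then obtain x where x: "x \<in> wspace M mu" "x \<noteq> 0"
      unfolding wts_def using wspace_sub[OF UM] vs.subspace_0 by blast
    have "Fw M m ` {w. wtT la w = mu} \<noteq> {}"
    proof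
      assume "Fw M m ` {w. wtT la w = mu} = {}"
      hence "x \<in> vs.span {}" using wspace_in_span[OF x(1)] by simp
      thus False using x(2) by simp
    qed
    then obtain w where w: "wtT la w = mu" by blast
    have "le_wt mu la" unfolding le_wt_def
    proof (intro exI[of _ "\<lambda>j. count_list w j"] conjI allI)
      show "finite {i. count_list w i \<noteq> 0}"
        by (rule finite_subset[of _ "set w"]) (auto simp: count_list_0_iff)
      fix j show "la j - mu j = int (count_list w j) - int (count_list w (j - 1))"
        using w by (auto simp: wtT_def asum_count)
    qed
    thus "mu \<in> {\<mu>. \<exists>la\<in>{la}. le_wt \<mu> la}" by simp
  qed simp
qed

end

lemma Ewt_word: "is_Umod M \<Longrightarrow> y \<in> wspace M mu \<Longrightarrow> foldr (opE M) w y \<in> wspace M (\<lambda>i. mu i + asum w i)"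
proof (induct w)
  case Nil thus ?case by simp
next
  case (Cons a w)
  hence "opE M a (foldr (opE M) w y) \<in> wspace M (\<lambda>i. (mu i + asum w i) + al a i)" by (intro E_wt) auto
  thus ?case by (simp add: algebra_simps)
qed

lemma hw_from_nil:
  assumes irr: "irreducible_mod M" and y: "y \<in> wspace M mu" "y \<noteq> 0"
    and nil: "\<And>w. n0 \<le> length w \<Longrightarrow> foldr (opE M) w y = 0"
  shows "\<exists>nu. is_L nu M"
proof -
  have UM: "is_Umod M" using irr by (simp add: irreducible_mod_def)
  define P where "P n \<longleftrightarrow> (\<exists>w. length w = n \<and> foldr (opE M) w y \<noteq> 0)" for n
  have P0: "P 0" using y by (auto simp: P_def)
  have Pb: "P n \<Longrightarrow> n < n0" for n using nil by (force simp: P_def not_less)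
  define n where "n = (GREATEST n. P n)"
  have Pn: "P n" unfolding n_def by (rule GreatestI_nat[where k=0 and b=n0 and P=P, OF P0]) (use Pb in \<open>auto intro: less_imp_le\<close>)
  have Pmax: "\<not> P (Suc n)"
  proof
    assume "P (Suc n)"
    hence "Suc n \<le> n" unfolding n_def by (rule Greatest_le_nat[where b=n0]) (use Pb in \<open>auto intro: less_imp_le\<close>)
    thus False by simp
  qed
  obtain w where w: "length w = n" "foldr (opE M) w y \<noteq> 0" using Pn by (auto simp: P_def)
  let ?z = "foldr (opE M) w y"
  have zw: "?z \<in> wspace M (\<lambda>i. mu i + asum w i)" by (rule Ewt_word[OF UM y(1)])
  have zE: "opE M i ?z = 0" for i
  proof (rule ccontr)
    assume "opE M i ?z \<noteq> 0"
    hence "P (Suc n)" unfolding P_def using w by (intro exI[of _ "i # w"]) simp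
    thus False using Pmax by simp
  qed
  have "is_L (\<lambda>i. mu i + asum w i) M" unfolding is_L_def
    using irr zw w(2) zE by (auto simp: wspace_def)
  thus ?thesis by blast
qed

lemma exists_wvec:
  assumes irr: "irreducible_mod M" and wm: "weight_module M"
  shows "\<exists>mu y. y \<in> wspace M mu \<and> y \<noteq> 0"
proof -
  have UM: "is_Umod M" using irr by (simp add: irreducible_mod_def)
  interpret vs: vector_space "smult M" using UM by (simp add: is_Umod_def)
  have "carr M \<noteq> {0}" using irr by (simp add: irreducible_mod_def)
  moreover have "0 \<in> carr M" by (rule carr_0[OF UM])
  ultimately obtain x where x: "x \<in> carr M" "x \<noteq> 0" by blast
  then obtain S f where Sf: "finite S" "\<forall>mu\<in>S. f mu \<in> wspace M mu" "x = sum f S"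
    using wm unfolding weight_module_def by blast
  have "\<exists>mu\<in>S. f mu \<noteq> 0"
  proof (rule ccontr)
    assume "\<not> (\<exists>mu\<in>S. f mu \<noteq> 0)"
    hence "sum f S = 0" by simp
    thus False using Sf x by simp
  qed
  thus ?thesis using Sf by blast
qed

lemma Chi_class: assumes "irreducible_mod M" "in_Chi M" shows "\<exists>nu. is_L nu M"
proof -
  have wm: "weight_module M" using assms(2) by (simp add: in_Chi_def)
  obtain mu y where y: "y \<in> wspace M mu" "y \<noteq> 0" using exists_wvec[OF assms(1) wm] by blast
  have "y \<in> carr M" using y by (simp add: wspace_def)
  then obtain n0 where "\<forall>w::int list. n0 \<le> length w \<longrightarrow> foldr (opE M) w y = 0"
    using assms(2) unfolding in_Chi_def by blast
  thus ?thesis using hw_from_nil[OF assms(1) y] by blast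
qed

lemma shift_const:
  fixes e :: "int \<Rightarrow> int"
  assumes "\<And>j. e j = e (j - 1)" shows "e j = e k"
proof -
  have up: "e (k + int n) = e k" for n by (induct n) (auto simp: assms[of "k + 1 + int _"] algebra_simps
       , metis add.commute add_diff_cancel_left' assms)
  have down: "e (k - int n) = e k" for n by (induct n) (auto, metis assms diff_diff_eq add.commute)
  show ?thesis
  proof (cases "j \<ge> k")
    case True thus ?thesis using up[of "nat (j - k)"] by simp
  next
    case False thus ?thesis using down[of "nat (k - j)"] by simp
  qed
qed

lemma le_wt_unique:
  fixes c1 c2 :: "int \<Rightarrow> nat"
  assumes f: "finite {i. c1 i \<noteq> 0}" "finite {i. c2 i \<noteq> 0}"
    and d: "\<And>j. int (c1 j) - int (c1 (j - 1)) = int (c2 j) - int (c2 (j - 1))"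
  shows "c1 = c2"
proof -
  define e where "e j = int (c1 j) - int (c2 j)" for j
  have ej: "e j = e (j - 1)" for j using d[of j] by (simp add: e_def algebra_simps)
  have "finite ({i. c1 i \<noteq> 0} \<union> {i. c2 i \<noteq> 0})" using f by simp
  then obtain k where k: "k \<notin> {i. c1 i \<noteq> 0} \<union> {i. c2 i \<noteq> 0}"
    using ex_new_if_finite[OF infinite_UNIV_int] by blast
  have "e k = 0" using k by (simp add: e_def)
  hence "e j = 0" for j using shift_const[where e=e and j=j and k=k, OF ej] by simp
  thus ?thesis by (auto simp: e_def fun_eq_iff)
qed

lemma O_nil:
  assumes O: "in_O M" and y: "y \<in> wspace M mu"
  shows "\<exists>n0. \<forall>w. n0 \<le> length w \<longrightarrow> foldr (opE M) w y = 0"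
proof -
  have UM: "is_Umod M" using O by (simp add: in_O_def weight_module_def)
  interpret vs: vector_space "smult M" using UM by (simp add: is_Umod_def)
  obtain Las where Las: "finite Las" "wts M \<subseteq> {\<mu>. \<exists>la\<in>Las. le_wt \<mu> la}"
    using O unfolding in_O_def by blast
  define Pr where "Pr la' c \<longleftrightarrow> finite {i. c i \<noteq> 0} \<and> (\<forall>j. la' j - mu j = int (c j) - int (c (j - 1)))"
    for la' and c :: "int \<Rightarrow> nat"
  define C where "C la' = (SOME c. Pr la' c)" for la'
  define h where "h la' = (\<Sum>a\<in>{a. C la' a \<noteq> 0}. C la' a)" for la'
  show ?thesis
  proof (intro exI[of _ "Suc (\<Sum>la'\<in>Las. h la')"] allI impI)
    fix w :: "int list" assume len: "Suc (\<Sum>la'\<in>Las. h la') \<le> length w"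
    show "foldr (opE M) w y = 0"
    proof (rule ccontr)
      assume z: "foldr (opE M) w y \<noteq> 0"
      let ?nu = "\<lambda>i. mu i + asum w i"
      have zw: "foldr (opE M) w y \<in> wspace M ?nu" by (rule Ewt_word[OF UM y])
      have "?nu \<in> wts M" unfolding wts_def using zw z by auto
      then obtain la' c where la': "la' \<in> Las" "finite {i. c i \<noteq> 0}"
        "\<And>j. la' j - ?nu j = int (c j) - int (c (j - 1))"
        using Las(2) unfolding le_wt_def by blast
      define c' where "c' j = c j + count_list w j" for j
      have Pc': "Pr la' c'" unfolding Pr_def
      proof
        have "{i. c' i \<noteq> 0} \<subseteq> {i. c i \<noteq> 0} \<union> set w"
          by (auto simp: c'_def count_list_0_iff)
        moreover have "finite ({i. c i \<noteq> 0} \<union> set w)" using la'(2) by simp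
        ultimately show "finite {i. c' i \<noteq> 0}" by (rule finite_subset)
        show "\<forall>j. la' j - mu j = int (c' j) - int (c' (j - 1))"
          using la'(3) by (simp add: c'_def asum_count algebra_simps)
      qed
      hence PC: "Pr la' (C la')" unfolding C_def by (rule someI[where P="Pr la'"])
      have Ceq: "C la' = c'"
        by (rule le_wt_unique) (use PC Pc' in \<open>auto simp: Pr_def\<close>)
      have fC: "finite {a. C la' a \<noteq> 0}" using PC by (simp add: Pr_def)
      have sub: "set w \<subseteq> {a. C la' a \<noteq> 0}"
        using Ceq by (auto simp: c'_def dest: count_pos)
      have "length w = (\<Sum>a\<in>set w. count_list w a)" by (simp add: sum_count_set)
      also have "\<dots> \<le> (\<Sum>a\<in>set w. C la' a)" by (rule sum_mono) (simp add: Ceq c'_def)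
      also have "\<dots> \<le> h la'" unfolding h_def by (rule sum_mono2[OF fC sub]) simp
      also have "\<dots> \<le> (\<Sum>la'\<in>Las. h la')" by (rule member_le_sum[OF la'(1)]) (simp_all add: Las(1))
      finally show False using len by simp
    qed
  qed
qed

lemma O_class: assumes "irreducible_mod M" "in_O M" shows "\<exists>nu. is_L nu M"
proof -
  have wm: "weight_module M" using assms(2) by (simp add: in_O_def)
  obtain mu y where y: "y \<in> wspace M mu" "y \<noteq> 0" using exists_wvec[OF assms(1) wm] by blast
  obtain n0 where "\<forall>w::int list. n0 \<le> length w \<longrightarrow> foldr (opE M) w y = 0"
    using O_nil[OF assms(2) y(1)] by blast
  thus ?thesis using hw_from_nil[OF assms(1) y] by blast
qed

theorem theorem9p4:
  fixes M :: "'b::ab_group_add umod" and N :: "'c::ab_group_add umod"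
    and la \<mu> :: wt
  shows
  \<comment> \<open>well-definedness and injectivity of lambda |-> [L(lambda)]\<close>
  "(is_L la M \<and> is_L \<mu> N \<longrightarrow> (la = \<mu> \<longleftrightarrow> mod_iso M N))
   \<comment> \<open>(1) category C^hi\<close>
   \<and> (\<forall>\<nu>. \<exists>L :: (nat \<Rightarrow> qv) umod. is_L \<nu> L)
   \<and> (is_L la M \<longrightarrow> in_Chi M)
   \<and> (irreducible_mod M \<and> in_Chi M \<longrightarrow> (\<exists>\<nu>. is_L \<nu> M))
   \<comment> \<open>(2) category O\<close>
   \<and> (is_L la M \<longrightarrow> in_O M)
   \<and> (irreducible_mod M \<and> in_O M \<longrightarrow> (\<exists>\<nu>. is_L \<nu> M))"
proof (intro conjI impI allI)
  assume h: "is_L la M \<and> is_L \<mu> N"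
  show "la = \<mu> \<longleftrightarrow> mod_iso M N"
  proof
    assume "la = \<mu>" thus "mod_iso M N" using h iso_same by blast
  next
    assume "mod_iso M N" thus "la = \<mu>" using h iso_same_wt by blast
  qed
next
  fix \<nu> show "\<exists>L :: (nat \<Rightarrow> qv) umod. is_L \<nu> L" using isL_L by blast
next
  assume hL: "is_L la M"
  obtain m where "is_Umod M" "m \<in> carr M" "m \<noteq> 0" "\<And>i. opE M i m = 0"
    "\<And>i. opK M i m = smult M (vq powi la i) m" "irreducible_mod M" using isL_unfold[OF hL] by blast
  thus "in_Chi M" by (rule isL_Chi)
next
  assume "irreducible_mod M \<and> in_Chi M" thus "\<exists>\<nu>. is_L \<nu> M" using Chi_class by blast
next
  assume hL: "is_L la M"
  obtain m where "is_Umod M" "m \<in> carr M" "m \<noteq> 0" "\<And>i. opE M i m = 0"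
    "\<And>i. opK M i m = smult M (vq powi la i) m" "irreducible_mod M" using isL_unfold[OF hL] by blast
  thus "in_O M" by (rule isL_O)
next
  assume "irreducible_mod M \<and> in_O M" thus "\<exists>\<nu>. is_L \<nu> M" using O_class by blast
qed

end
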